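(* Let $G$ be a profinite group and let $L$, $U$, $V$ be closed subgroups of $G$ such that $L$ normalises $U$ and $V$. For every smooth representation $M\in\operatorname{Rep}(G)$ there is a linear automorphism $z_M\in\operatorname{GL}(M)$, commuting with the action of $L$ and with the operators $e_U$ and $e_V$ on $M$, such that $z_M^{-1}e_Ue_V$ is an idempotent in $\operatorname{End}_{\mathbb C}(M)$.
   Context: For a profinite group $G$, $\operatorname{Rep}(G)$ denotes the category of smooth complex representations of $G$ (every vector is fixed by some open subgroup). For a closed subgroup $H\subseteq G$, $e_H$ denotes the normalised Haar measure of $H$ (total mass $1$); it acts on every smooth representation $M$ of $G$ by $m\mapsto\int_H h\cdot m\,\mathrm dh$, i.e. as the projection onto the $H$-fixed vectors $M^H$. *)

theory Defs
  imports "HOL-Analysis.Analysis" "HOL-Algebra.Coset"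
begin

definition profinite_group :: "('g, 'b) monoid_scheme \<Rightarrow> 'g topology \<Rightarrow> bool" where
  "profinite_group G T \<longleftrightarrow>
     group G \<and> topspace T = carrier G \<and>
     continuous_map (prod_topology T T) T (\<lambda>(x, y). x \<otimes>\<^bsub>G\<^esub> y) \<and>
     continuous_map T T (\<lambda>x. inv\<^bsub>G\<^esub> x) \<and>
     compact_space T \<and> Hausdorff_space T \<and>
     (\<forall>x \<in> topspace T. connected_component_of_set T x = {x})"

definition closed_subgroup :: "('g, 'b) monoid_scheme \<Rightarrow> 'g topology \<Rightarrow> 'g set \<Rightarrow> bool" where
  "closed_subgroup G T H \<longleftrightarrow> subgroup H G \<and> closedin T H"

definition normalises :: "('g, 'b) monoid_scheme \<Rightarrow> 'g set \<Rightarrow> 'g set \<Rightarrow> bool" where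
  "normalises G L U \<longleftrightarrow> (\<forall>l \<in> L. (\<lambda>u. l \<otimes>\<^bsub>G\<^esub> u \<otimes>\<^bsub>G\<^esub> inv\<^bsub>G\<^esub> l) ` U = U)"

definition smooth_rep ::
  "('g, 'b) monoid_scheme \<Rightarrow> 'g topology \<Rightarrow> (complex \<Rightarrow> 'v::ab_group_add \<Rightarrow> 'v) \<Rightarrow> ('g \<Rightarrow> 'v \<Rightarrow> 'v) \<Rightarrow> bool" where
  "smooth_rep G T smul \<rho> \<longleftrightarrow>
     Vector_Spaces.vector_space smul \<and>
     (\<forall>g \<in> carrier G. Vector_Spaces.linear smul smul (\<rho> g)) \<and>
     \<rho> \<one>\<^bsub>G\<^esub> = id \<and>
     (\<forall>g \<in> carrier G. \<forall>h \<in> carrier G. \<rho> (g \<otimes>\<^bsub>G\<^esub> h) = \<rho> g \<circ> \<rho> h) \<and>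
     (\<forall>m. \<exists>K. subgroup K G \<and> openin T K \<and> (\<forall>k \<in> K. \<rho> k m = m))"

definition stab :: "('g, 'b) monoid_scheme \<Rightarrow> ('g \<Rightarrow> 'v \<Rightarrow> 'v) \<Rightarrow> 'v \<Rightarrow> 'g set" where
  "stab G \<rho> m = {g \<in> carrier G. \<rho> g m = m}"

text \<open>The action of the normalised Haar measure e_H on a smooth vector m:
  h \<mapsto> h.m is constant on the left cosets of the open finite-index subgroup
  H \<inter> Stab(m) of H, each of Haar measure 1/[H : H \<inter> Stab(m)], so the integral
  is the average over these cosets.\<close>
definition haar_proj ::
  "('g, 'b) monoid_scheme \<Rightarrow> (complex \<Rightarrow> 'v::ab_group_add \<Rightarrow> 'v) \<Rightarrow> ('g \<Rightarrow> 'v \<Rightarrow> 'v) \<Rightarrow> 'g set \<Rightarrow> 'v \<Rightarrow> 'v" where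
  "haar_proj G smul \<rho> H m =
     (let Cs = (\<lambda>h. h <#\<^bsub>G\<^esub> (H \<inter> stab G \<rho> m)) ` H in
      smul (1 / of_nat (card Cs)) (\<Sum>C\<in>Cs. \<rho> (SOME c. c \<in> C) m))"

end

theory Submission
  imports Defs
begin


lemma additive_zero:
  fixes f :: "'a::ab_group_add \<Rightarrow> 'b::ab_group_add"
  assumes "\<And>x y. f (x + y) = f x + f y" shows "f 0 = 0"
  using assms[of 0 0] by simp

lemma additive_diff:
  fixes f :: "'a::ab_group_add \<Rightarrow> 'b::ab_group_add"
  assumes "\<And>x y. f (x + y) = f x + f y" shows "f (x - y) = f x - f y"
  using assms[of "x - y" y] by (simp add: algebra_simps)

lemma additive_sum:
  fixes f :: "'a::ab_group_add \<Rightarrow> 'b::ab_group_add"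
  assumes "\<And>x y. f (x + y) = f x + f y" shows "f (sum g S) = (\<Sum>a\<in>S. f (g a))"
proof (induction S rule: infinite_finite_induct)
  case (infinite A) then show ?case using additive_zero[OF assms] by simp
next
  case empty then show ?case using additive_zero[OF assms] by simp
next
  case (insert x F) then show ?case by (simp add: assms)
qed

definition goodf :: "(complex \<Rightarrow> 'v::ab_group_add \<Rightarrow> 'v) \<Rightarrow> ('v \<Rightarrow> 'v) \<Rightarrow> ('v \<Rightarrow> 'v) \<Rightarrow> 'v set \<Rightarrow> ('v \<Rightarrow> 'v \<Rightarrow> real) \<Rightarrow> bool" where
  "goodf smul P Q Ob Bf \<longleftrightarrow> finite Ob \<and>
        (\<forall>a\<in>module.span smul Ob. P a \<in> module.span smul Ob \<and> Q a \<in> module.span smul Ob) \<and>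
        (\<forall>a\<in>module.span smul Ob. \<forall>b\<in>module.span smul Ob. \<forall>c\<in>module.span smul Ob. Bf (a - b) c = Bf a c - Bf b c \<and>
              Bf a (b - c) = Bf a b - Bf a c \<and> Bf (P a) b = Bf a (P b) \<and> Bf (Q a) b = Bf a (Q b)) \<and>
        (\<forall>a\<in>module.span smul Ob. Bf a a = 0 \<longrightarrow> a = 0)"

locale alg = vector_space smul
  for smul :: "complex \<Rightarrow> 'v::ab_group_add \<Rightarrow> 'v" (infixr "*w" 75) +
  fixes P Q :: "'v \<Rightarrow> 'v"
  assumes Padd: "P (x + y) = P x + P y" and Pscale: "P (c *w x) = c *w P x"
    and Qadd: "Q (x + y) = Q x + Q y" and Qscale: "Q (c *w x) = c *w Q x"
    and PP: "P (P x) = P x" and QQ: "Q (Q x) = Q x"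
    and local: "\<And>x. \<exists>Ob Bf. goodf smul P Q Ob Bf \<and> x \<in> span Ob"
begin

definition D where "D x = P x - Q x"
definition z0 where "z0 x = x - D (D x)"

lemma Pdiff: "P (x - y) = P x - P y" by (rule additive_diff) (rule Padd)
lemma Qdiff: "Q (x - y) = Q x - Q y" by (rule additive_diff) (rule Qadd)
lemma P0: "P 0 = 0" by (rule additive_zero) (rule Padd)
lemma Q0: "Q 0 = 0" by (rule additive_zero) (rule Qadd)

lemma Dadd: "D (x + y) = D x + D y" by (simp add: D_def Padd Qadd)
lemma Dscale: "D (c *w x) = c *w D x" by (simp add: D_def Pscale Qscale scale_right_diff_distrib)
lemma z0add: "z0 (x + y) = z0 x + z0 y" by (simp add: z0_def Dadd)
lemma z0scale: "z0 (c *w x) = c *w z0 x" by (simp add: z0_def Dscale scale_right_diff_distrib)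
lemma z0diff: "z0 (x - y) = z0 x - z0 y" by (rule additive_diff) (rule z0add)
lemma z00: "z0 0 = 0" by (rule additive_zero) (rule z0add)

lemma z0neg: "z0 (- x) = - z0 x" using z0diff[of 0 x] by (simp add: z00)

lemma DD: "D (D x) = P x - P (Q x) - Q (P x) + Q x"
  by (simp add: D_def Pdiff Qdiff PP QQ)

lemma z0P: "z0 (P x) = P (z0 x)"
  by (simp add: z0_def DD Pdiff Padd PP QQ algebra_simps)
lemma z0Q: "z0 (Q x) = Q (z0 x)"
  by (simp add: z0_def DD Qdiff Qadd PP QQ algebra_simps)
lemma z0PQ: "z0 (P (Q x)) = P (Q (P (Q x)))"
  by (simp add: z0_def DD Qdiff Qadd Pdiff Padd PP QQ algebra_simps)
lemma Qz0: "Q (z0 x) = Q (P (Q x))"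
  by (simp add: z0_def DD Qdiff Qadd Pdiff Padd PP QQ algebra_simps)

lemma goodE:
  assumes "goodf smul P Q Ob Bf"
  shows "finite Ob" and "a \<in> span Ob \<Longrightarrow> P a \<in> span Ob" and "a \<in> span Ob \<Longrightarrow> Q a \<in> span Ob"
   and "a \<in> span Ob \<Longrightarrow> b \<in> span Ob \<Longrightarrow> c \<in> span Ob \<Longrightarrow> Bf (a - b) c = Bf a c - Bf b c"
   and "a \<in> span Ob \<Longrightarrow> b \<in> span Ob \<Longrightarrow> c \<in> span Ob \<Longrightarrow> Bf a (b - c) = Bf a b - Bf a c"
   and "a \<in> span Ob \<Longrightarrow> b \<in> span Ob \<Longrightarrow> Bf (P a) b = Bf a (P b)"
   and "a \<in> span Ob \<Longrightarrow> b \<in> span Ob \<Longrightarrow> Bf (Q a) b = Bf a (Q b)"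
   and "a \<in> span Ob \<Longrightarrow> Bf a a = 0 \<Longrightarrow> a = 0"
proof -
  obtain f c1 c2 c3 where f: "finite Ob" and c1: "\<forall>a\<in>span Ob. P a \<in> span Ob \<and> Q a \<in> span Ob"
    and c2: "\<forall>a\<in>span Ob. \<forall>b\<in>span Ob. \<forall>c\<in>span Ob. Bf (a - b) c = Bf a c - Bf b c \<and>
              Bf a (b - c) = Bf a b - Bf a c \<and> Bf (P a) b = Bf a (P b) \<and> Bf (Q a) b = Bf a (Q b)"
    and c3: "\<forall>a\<in>span Ob. Bf a a = 0 \<longrightarrow> a = 0"
    using assms unfolding goodf_def by (elim conjE) 
  show "finite Ob" by (fact f)
  show "a \<in> span Ob \<Longrightarrow> P a \<in> span Ob" using c1 by blast
  show "a \<in> span Ob \<Longrightarrow> Q a \<in> span Ob" using c1 by blast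
  show "a \<in> span Ob \<Longrightarrow> b \<in> span Ob \<Longrightarrow> c \<in> span Ob \<Longrightarrow> Bf (a - b) c = Bf a c - Bf b c"
    using c2 by blast
  show "a \<in> span Ob \<Longrightarrow> b \<in> span Ob \<Longrightarrow> c \<in> span Ob \<Longrightarrow> Bf a (b - c) = Bf a b - Bf a c"
    using c2 by blast
  show "a \<in> span Ob \<Longrightarrow> b \<in> span Ob \<Longrightarrow> Bf (P a) b = Bf a (P b)"
    using c2 by blast
  show "a \<in> span Ob \<Longrightarrow> b \<in> span Ob \<Longrightarrow> Bf (Q a) b = Bf a (Q b)"
    using c2 by blast
  show "a \<in> span Ob \<Longrightarrow> Bf a a = 0 \<Longrightarrow> a = 0" using c3 by blast
qed

lemma good_D: assumes g: "goodf smul P Q Ob Bf" and a: "a \<in> span Ob" shows "D a \<in> span Ob"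
  using goodE[OF g] a by (simp add: D_def span_diff)
lemma good_z0: assumes g: "goodf smul P Q Ob Bf" and a: "a \<in> span Ob" shows "z0 a \<in> span Ob"
  using good_D[OF g] a by (simp add: z0_def span_diff)
lemma good_Dsa: assumes g: "goodf smul P Q Ob Bf" and a: "a \<in> span Ob" and b: "b \<in> span Ob"
  shows "Bf (D a) b = Bf a (D b)"
  using goodE(2,3,4,5,6,7)[OF g] a b by (simp add: D_def)
lemma good_zsa: assumes g: "goodf smul P Q Ob Bf" and a: "a \<in> span Ob" and b: "b \<in> span Ob"
  shows "Bf (z0 a) b = Bf a (z0 b)"
proof -
  have "Bf (z0 a) b = Bf a b - Bf (D (D a)) b" unfolding z0_def
    using goodE(4)[OF g a good_D[OF g good_D[OF g a]] b] .
  also have "Bf (D (D a)) b = Bf a (D (D b))"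
    using good_Dsa[OF g good_D[OF g a] b] good_Dsa[OF g a good_D[OF g b]] by simp
  also have "Bf a b - Bf a (D (D b)) = Bf a (z0 b)" unfolding z0_def
    using goodE(5)[OF g a b good_D[OF g good_D[OF g b]]] by simp
  finally show ?thesis .
qed
lemma good_0: assumes g: "goodf smul P Q Ob Bf" and a: "a \<in> span Ob" shows "Bf a 0 = 0"
  using goodE(5)[OF g a a a] by simp

lemma key1: assumes h: "z0 (z0 w) = 0" shows "z0 w = 0"
proof -
  obtain Ob Bf where g: "goodf smul P Q Ob Bf" and w: "w \<in> span Ob" using local[of w] by blast
  have "Bf (z0 w) (z0 w) = Bf w (z0 (z0 w))" using good_zsa[OF g w good_z0[OF g w]] .
  also have "\<dots> = 0" using h good_0[OF g w] by simp
  finally show ?thesis using goodE(8)[OF g good_z0[OF g w]] by blast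
qed

lemma key3: assumes h: "z0 x = 0" shows "P (Q x) = 0"
proof -
  obtain Ob Bf where g: "goodf smul P Q Ob Bf" and w: "x \<in> span Ob" using local[of x] by blast
  have q: "Q (P (Q x)) = 0" using Qz0[of x] h Q0 by simp
  have Qx: "Q x \<in> span Ob" and PQx: "P (Q x) \<in> span Ob" using goodE(2,3)[OF g] w by auto
  have "Bf (P (Q x)) (P (Q x)) = Bf (Q x) (P (P (Q x)))" using goodE(6)[OF g Qx PQx] .
  also have "\<dots> = Bf (Q x) (P (Q x))" by (simp add: PP)
  also have "\<dots> = Bf x (Q (P (Q x)))" using goodE(7)[OF g w PQx] .
  also have "\<dots> = 0" using q good_0[OF g w] by simp
  finally show ?thesis using goodE(8)[OF g PQx] by blast
qed


lemma zpow_add: "(z0^^i) (x + y) = (z0^^i) x + (z0^^i) y"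
  by (induction i) (simp_all add: z0add)
lemma zpow_scale: "(z0^^i) (c *w x) = c *w (z0^^i) x"
  by (induction i) (simp_all add: z0scale)
lemma zpow_diff: "(z0^^i) (x - y) = (z0^^i) x - (z0^^i) y"
  by (rule additive_diff) (rule zpow_add)
lemma zpow_sum: "(z0^^i) (sum g S) = (\<Sum>a\<in>S. (z0^^i) (g a))"
  by (rule additive_sum) (rule zpow_add)
lemma zpow_span: assumes g: "goodf smul P Q Ob Bf" and a: "a \<in> span Ob" shows "(z0^^i) a \<in> span Ob"
  by (induction i) (simp_all add: a good_z0[OF g])

lemma zpow_split: "k \<le> i \<Longrightarrow> (z0^^k) ((z0^^(i-k)) x) = (z0^^i) x"
proof -
  assume "k \<le> i"
  have "(z0^^k) ((z0^^(i-k)) x) = (z0^^(k + (i-k))) x" by (simp only: funpow_add comp_apply)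
  then show ?thesis using \<open>k \<le> i\<close> by simp
qed

lemma kerpow: "(z0^^k) y = 0 \<Longrightarrow> z0 y = 0"
proof (induction k arbitrary: y)
  case 0 then show ?case by (simp add: z00)
next
  case (Suc k)
  have "(z0^^k) (z0 y) = 0" using Suc.prems by (simp add: funpow_Suc_right del: funpow.simps)
  then have "z0 (z0 y) = 0" by (rule Suc.IH)
  then show ?case by (rule key1)
qed

lemma decomp: "\<exists>a b. z0 a = 0 \<and> x = a + z0 b"
proof -
  obtain Ob Bf where g: "goodf smul P Q Ob Bf" and xO: "x \<in> span Ob" using local[of x] by blast
  define n where "n = card Ob"
  define vs where "vs i = (z0^^i) x" for i
  show ?thesis
  proof (cases "inj_on vs {0..n}")
    case False
    then obtain i j where ij: "i \<le> n" "j \<le> n" "i \<noteq> j" "vs i = vs j"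
      unfolding inj_on_def by auto
    have "\<exists>i j. i < j \<and> vs i = vs j"
      using ij by (metis linorder_neqE_nat)
    then obtain i j where ij: "i < j" "vs i = vs j" by blast
    define y where "y = x - (z0^^(j-i)) x"
    have "(z0^^i) y = vs i - (z0^^i) ((z0^^(j-i)) x)" by (simp add: y_def zpow_diff vs_def)
    also have "(z0^^i) ((z0^^(j-i)) x) = vs j"
    proof -
      have "(z0^^i) ((z0^^(j-i)) x) = (z0^^(i + (j-i))) x" by (simp only: funpow_add comp_apply)
      then show ?thesis using ij(1) by (simp add: vs_def)
    qed
    finally have "(z0^^i) y = 0" using ij by simp
    then have zy: "z0 y = 0" by (rule kerpow)
    have "z0 ((z0^^(j-i-1)) x) = (z0^^(j-i)) x"
      using ij(1) by (metis Suc_diff_Suc diff_Suc_1 funpow.simps(2) comp_apply zero_less_diff)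
    then have "x = y + z0 ((z0^^(j-i-1)) x)" by (simp add: y_def)
    with zy show ?thesis by blast
  next
    case True
    define S where "S = vs ` {0..n}"
    have cS: "card S = Suc n" using True by (simp add: S_def card_image)
    have SO: "S \<subseteq> span Ob" using zpow_span[OF g xO] by (auto simp: S_def vs_def)
    have "dependent S"
    proof (rule ccontr)
      assume "independent S"
      from independent_span_bound[OF goodE(1)[OF g] this SO] cS show False by (simp add: n_def)
    qed
    then obtain t u where t: "finite t" "t \<subseteq> S" "(\<Sum>v\<in>t. u v *w v) = 0" "\<exists>v\<in>t. u v \<noteq> 0"
      unfolding dependent_explicit by blast
    define c where "c i = (if vs i \<in> t then u (vs i) else 0)" for i
    have "(\<Sum>i\<in>{0..n}. c i *w vs i) = (\<Sum>v\<in>S. (if v \<in> t then u v else 0) *w v)"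
      unfolding S_def c_def by (subst sum.reindex[OF True]) simp
    also have "\<dots> = (\<Sum>v\<in>S. (if v \<in> t then u v *w v else 0))"
      by (rule sum.cong) auto
    also have "\<dots> = (\<Sum>v\<in>t. u v *w v)"
      using t(1,2) by (simp add: sum.If_cases Int_absorb1 S_def)
    finally have sum0: "(\<Sum>i\<in>{0..n}. c i *w vs i) = 0" using t(3) by simp
    obtain i0 where i0: "i0 \<le> n" "c i0 \<noteq> 0"
      using t(2,4) by (auto simp: S_def c_def)
    define k where "k = (LEAST i. c i \<noteq> 0)"
    have ck: "c k \<noteq> 0" unfolding k_def by (rule LeastI[of _ i0]) (rule i0(2))
    have kn: "k \<le> n" using Least_le[of "\<lambda>i. c i \<noteq> 0" i0] i0 unfolding k_def by simp
    have below: "c i = 0" if "i < k" for i using not_less_Least[of i "\<lambda>i. c i \<noteq> 0"] that unfolding k_def by blast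
    define y where "y = (\<Sum>i\<in>{k..n}. c i *w (z0^^(i-k)) x)"
    have "(z0^^k) y = (\<Sum>i\<in>{k..n}. c i *w vs i)"
      unfolding y_def zpow_sum zpow_scale vs_def
      by (rule sum.cong) (simp_all add: zpow_split)
    also have "\<dots> = (\<Sum>i\<in>{0..n}. c i *w vs i)"
      by (rule sum.mono_neutral_left) (auto simp: below)
    finally have "(z0^^k) y = 0" using sum0 by simp
    then have zy: "z0 y = 0" by (rule kerpow)
    define s where "s = (\<Sum>i\<in>{Suc k..n}. c i *w (z0^^(i - Suc k)) x)"
    have "z0 s = (\<Sum>i\<in>{Suc k..n}. c i *w (z0^^(i - k)) x)"
      unfolding s_def additive_sum[of z0, OF z0add] z0scale
      by (rule sum.cong) (auto simp: Suc_diff_Suc[symmetric] simp del: funpow.simps intro!: arg_cong[where f="\<lambda>m. c _ *w (z0^^m) x"] | simp)+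
    then have ys: "y = c k *w x + z0 s"
      unfolding y_def using kn by (simp add: sum.atLeast_Suc_atMost)
    define a where "a = inverse (c k) *w y"
    define b where "b = - (inverse (c k) *w s)"
    have "z0 a = 0" by (simp add: a_def z0scale zy)
    moreover have "x = a + z0 b"
      using ck by (simp add: a_def b_def ys z0scale z0add z0neg scale_right_distrib)
    ultimately show ?thesis by blast
  qed
qed


definition E where "E x = (SOME a. z0 a = 0 \<and> (\<exists>b. x = a + z0 b))"

lemma E_spec: "z0 (E x) = 0 \<and> (\<exists>b. x = E x + z0 b)"
  unfolding E_def by (rule someI_ex) (use decomp[of x] in blast)

lemma E_uniq: assumes "z0 a = 0" "x = a + z0 b" shows "E x = a"
proof -
  obtain b' where b': "x = E x + z0 b'" using E_spec by blast
  have eq: "a - E x = z0 (b' - b)" using assms(2) b' by (simp add: z0diff algebra_simps)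
  have "z0 (a - E x) = 0" using assms(1) E_spec by (simp add: z0diff)
  then have "z0 (z0 (b' - b)) = 0" using eq by simp
  then have "z0 (b' - b) = 0" by (rule key1)
  then show ?thesis using eq by simp
qed

lemma E_comm:
  assumes Tadd: "\<And>x y. T (x + y) = T x + T y" and Tz: "\<And>x. T (z0 x) = z0 (T x)"
  shows "E (T x) = T (E x)"
proof -
  obtain b where b: "x = E x + z0 b" using E_spec by blast
  have "z0 (T (E x)) = 0" using Tz[of "E x"] E_spec additive_zero[of T, OF Tadd] by simp
  moreover have "T x = T (E x) + z0 (T b)" using b Tadd Tz by metis
  ultimately show ?thesis by (rule E_uniq)
qed

lemma Eadd: "E (x + y) = E x + E y"
proof -
  obtain b where b: "x = E x + z0 b" using E_spec by blast
  obtain c where c: "y = E y + z0 c" using E_spec by blast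
  have "z0 (E x + E y) = 0" using E_spec by (simp add: z0add)
  moreover have "x + y = (E x + E y) + z0 (b + c)" using b c by (simp add: z0add algebra_simps)
  ultimately show ?thesis by (rule E_uniq)
qed

lemma Escale: "E (c *w x) = c *w E x"
proof -
  obtain b where b: "x = E x + z0 b" using E_spec by blast
  have "z0 (c *w E x) = 0" using E_spec by (simp add: z0scale)
  moreover have "c *w x = c *w E x + z0 (c *w b)" using b by (metis scale_right_distrib z0scale)
  ultimately show ?thesis by (rule E_uniq)
qed

definition zz where "zz x = z0 x + E x"

lemma zz_add: "zz (x + y) = zz x + zz y" by (simp add: zz_def z0add Eadd)
lemma zz_scale: "zz (c *w x) = c *w zz x" by (simp add: zz_def z0scale Escale scale_right_distrib)

lemma zz_comm:
  assumes Tadd: "\<And>x y. T (x + y) = T x + T y" and Tz: "\<And>x. T (z0 x) = z0 (T x)"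
  shows "zz (T x) = T (zz x)"
  by (simp add: zz_def Tadd Tz E_comm[OF Tadd Tz])

lemma zz_zero: assumes "zz w = 0" shows "w = 0"
proof -
  have h: "z0 w = - E w" using assms by (simp add: zz_def eq_neg_iff_add_eq_0)
  have "z0 (z0 w) = 0" using h E_spec by (simp add: z0neg)
  then have zw: "z0 w = 0" by (rule key1)
  then have Ew: "E w = 0" using h by simp
  obtain b where b: "w = E w + z0 b" using E_spec by blast
  have "z0 (z0 b) = 0" using b Ew zw by simp
  then have "z0 b = 0" by (rule key1)
  then show ?thesis using b Ew by simp
qed

lemma zz_inj: "inj zz"
proof (rule injI)
  fix x y assume "zz x = zz y"
  then have "zz (x - y) = 0" using additive_diff[of zz, OF zz_add] by simp
  then have "x - y = 0" by (rule zz_zero)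
  then show "x = y" by simp
qed

lemma zz_surj: "surj zz"
proof -
  have "y \<in> range zz" for y
  proof -
    obtain b where b: "y = E y + z0 b" using E_spec by blast
    obtain c where c: "b = E b + z0 c" using E_spec by blast
    have e: "E (E y + z0 c) = E y" using E_spec by (intro E_uniq) auto
    have "z0 (z0 c) = z0 b" using c E_spec by (metis add_diff_cancel_left' diff_zero z0diff)
    then have "zz (E y + z0 c) = y" using b e E_spec by (simp add: zz_def z0add algebra_simps)
    then show ?thesis by (metis rangeI)
  qed
  then show ?thesis by blast
qed

lemma zz_PQ: "zz (P (Q x)) = P (Q (P (Q x)))"
proof -
  have EP: "E (P y) = P (E y)" for y by (rule E_comm[OF Padd]) (simp add: z0P)
  have EQ: "E (Q y) = Q (E y)" for y by (rule E_comm[OF Qadd]) (simp add: z0Q)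
  have "E (P (Q x)) = 0" using EP EQ key3 E_spec by simp
  then show ?thesis by (simp add: zz_def z0PQ)
qed

theorem alg_main: "\<exists>z. Vector_Spaces.linear smul smul z \<and> bij z \<and>
   (\<forall>T. (\<forall>x y. T (x + y) = T x + T y) \<and> (\<forall>x. T (P x) = P (T x)) \<and> (\<forall>x. T (Q x) = Q (T x))
        \<longrightarrow> z \<circ> T = T \<circ> z) \<and>
   z \<circ> P = P \<circ> z \<and> z \<circ> Q = Q \<circ> z \<and> (let p = Hilbert_Choice.inv z \<circ> P \<circ> Q in p \<circ> p = p)"
proof (intro exI conjI allI impI)
  show "Vector_Spaces.linear smul smul zz"
    unfolding Vector_Spaces.linear_iff using vector_space_axioms zz_add zz_scale by blast
  show bz: "bij zz" using zz_inj zz_surj by (simp add: bij_def)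
  have Tgen: "zz \<circ> T = T \<circ> zz" if Ta: "\<And>x y. T (x + y) = T x + T y"
      and TP: "\<And>x. T (P x) = P (T x)" and TQ: "\<And>x. T (Q x) = Q (T x)" for T
  proof -
    have "T (z0 x) = z0 (T x)" for x
      by (simp add: z0_def D_def additive_diff[of T, OF Ta] TP TQ)
    then show ?thesis by (auto simp: zz_comm[OF Ta])
  qed
  show "zz \<circ> T = T \<circ> zz" if "(\<forall>x y. T (x + y) = T x + T y) \<and> (\<forall>x. T (P x) = P (T x)) \<and> (\<forall>x. T (Q x) = Q (T x))" for T
    using that Tgen by blast
  have cP: "zz \<circ> P = P \<circ> zz" using zz_comm[OF Padd] z0P by (auto simp: fun_eq_iff)
  show "zz \<circ> P = P \<circ> zz" by (fact cP)
  have cQ: "zz \<circ> Q = Q \<circ> zz" using zz_comm[OF Qadd] z0Q by (auto simp: fun_eq_iff)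
  show "zz \<circ> Q = Q \<circ> zz" by (fact cQ)
  define iz where "iz = Hilbert_Choice.inv zz"
  have i1: "iz (zz y) = y" for y unfolding iz_def using zz_inj by simp
  have i2: "zz (iz y) = y" for y unfolding iz_def using zz_surj by (simp add: surj_f_inv_f)
  have cPQ: "P (Q (iz y)) = iz (P (Q y))" for y
  proof -
    have "zz (P (Q (iz y))) = P (Q (zz (iz y)))" using cP cQ by (metis comp_apply)
    then have "zz (P (Q (iz y))) = P (Q y)" by (simp add: i2)
    then show ?thesis by (metis i1)
  qed
  have "(iz \<circ> P \<circ> Q) ((iz \<circ> P \<circ> Q) x) = (iz \<circ> P \<circ> Q) x" for x
  proof -
    have "(iz \<circ> P \<circ> Q) ((iz \<circ> P \<circ> Q) x) = iz (iz (P (Q (P (Q x)))))" by (simp add: cPQ)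
    also have "\<dots> = iz (P (Q x))" by (simp add: zz_PQ[symmetric] i1)
    finally show ?thesis by simp
  qed
  then show "let p = Hilbert_Choice.inv zz \<circ> P \<circ> Q in p \<circ> p = p"
    unfolding iz_def[symmetric] Let_def by (simp add: fun_eq_iff)
qed

end



definition rep :: "'a set \<Rightarrow> 'a" where "rep C = (SOME c. c \<in> C)"

context group begin

lemma lc_eq_iff:
  assumes J: "subgroup J G" and a: "a \<in> carrier G" and b: "b \<in> carrier G"
  shows "a <#\<^bsub>G\<^esub> J = b <#\<^bsub>G\<^esub> J \<longleftrightarrow> inv a \<otimes> b \<in> J"
proof
  assume e: "a <#\<^bsub>G\<^esub> J = b <#\<^bsub>G\<^esub> J"
  have "b \<in> b <#\<^bsub>G\<^esub> J" using subgroup.one_closed[OF J] b unfolding l_coset_def by force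
  then have "b \<in> a <#\<^bsub>G\<^esub> J" using e by simp
  then obtain j where j: "j \<in> J" "b = a \<otimes> j" unfolding l_coset_def by blast
  then show "inv a \<otimes> b \<in> J" using a subgroup.mem_carrier[OF J j(1)]
    by (simp add: m_assoc[symmetric])
next
  assume "inv a \<otimes> b \<in> J"
  then have "b \<in> a <#\<^bsub>G\<^esub> J" by (rule subgroup.lcos_module_rev[OF J is_group a b])
  then show "a <#\<^bsub>G\<^esub> J = b <#\<^bsub>G\<^esub> J" by (rule l_repr_independence[OF _ a J])
qed

lemma lc_self: assumes J: "subgroup J G" and a: "a \<in> carrier G" shows "a \<in> a <#\<^bsub>G\<^esub> J"
  using subgroup.one_closed[OF J] a unfolding l_coset_def by force

lemma rep_lc:
  assumes J: "subgroup J G" and a: "a \<in> carrier G"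
  shows "rep (a <#\<^bsub>G\<^esub> J) \<in> carrier G" and "inv a \<otimes> rep (a <#\<^bsub>G\<^esub> J) \<in> J"
    and "rep (a <#\<^bsub>G\<^esub> J) <#\<^bsub>G\<^esub> J = a <#\<^bsub>G\<^esub> J"
proof -
  have r: "rep (a <#\<^bsub>G\<^esub> J) \<in> a <#\<^bsub>G\<^esub> J" unfolding rep_def using lc_self[OF J a] by (rule someI)
  then show c: "rep (a <#\<^bsub>G\<^esub> J) \<in> carrier G" using l_coset_carrier[OF _ a J] by blast
  show "rep (a <#\<^bsub>G\<^esub> J) <#\<^bsub>G\<^esub> J = a <#\<^bsub>G\<^esub> J" using l_repr_independence[OF r a J] by simp
  then show "inv a \<otimes> rep (a <#\<^bsub>G\<^esub> J) \<in> J" using lc_eq_iff[OF J a c] by simp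
qed

lemma rep_lcH:
  assumes J: "subgroup J G" and H: "subgroup H G" and JH: "J \<subseteq> H" and C: "C \<in> (\<lambda>h. h <#\<^bsub>G\<^esub> J) ` H"
  shows "rep C \<in> H" and "rep C <#\<^bsub>G\<^esub> J = C"
proof -
  obtain h where h: "h \<in> H" "C = h <#\<^bsub>G\<^esub> J" using C by (rule imageE) 
  have hc: "h \<in> carrier G" by (rule subgroup.mem_carrier[OF H h(1)])
  have rc: "rep C \<in> carrier G" using rep_lc(1)[OF J hc] h(2) by simp
  have "inv h \<otimes> rep C \<in> J" using rep_lc(2)[OF J hc] h(2) by simp
  then have i: "inv h \<otimes> rep C \<in> H" using JH by (rule subsetD[rotated])
  have e: "h \<otimes> (inv h \<otimes> rep C) = rep C" using hc rc by (simp add: m_assoc[symmetric])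
  have "h \<otimes> (inv h \<otimes> rep C) \<in> H" by (rule subgroup.m_closed[OF H h(1) i])
  then show "rep C \<in> H" using e by simp
  show "rep C <#\<^bsub>G\<^esub> J = C" using rep_lc(3)[OF J hc] h by simp
qed

lemma suminv:
  fixes \<phi> :: "'a \<Rightarrow> 'c::comm_monoid_add"
  assumes J: "subgroup J G" and H: "subgroup H G" and JH: "J \<subseteq> H"
    and phi: "\<And>a j. a \<in> H \<Longrightarrow> j \<in> J \<Longrightarrow> \<phi> (a \<otimes> j) = \<phi> a"
    and fH: "\<And>a. a \<in> H \<Longrightarrow> f a \<in> H" and gH: "\<And>a. a \<in> H \<Longrightarrow> g a \<in> H"
    and fresp: "\<And>a b. a \<in> H \<Longrightarrow> b \<in> H \<Longrightarrow> inv a \<otimes> b \<in> J \<Longrightarrow> inv (f a) \<otimes> f b \<in> J"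
    and gresp: "\<And>a b. a \<in> H \<Longrightarrow> b \<in> H \<Longrightarrow> inv a \<otimes> b \<in> J \<Longrightarrow> inv (g a) \<otimes> g b \<in> J"
    and fg: "\<And>a. a \<in> H \<Longrightarrow> inv a \<otimes> f (g a) \<in> J"
    and gf: "\<And>a. a \<in> H \<Longrightarrow> inv a \<otimes> g (f a) \<in> J"
  shows "(\<Sum>C\<in>(\<lambda>h. h <#\<^bsub>G\<^esub> J) ` H. \<phi> (f (rep C))) = (\<Sum>C\<in>(\<lambda>h. h <#\<^bsub>G\<^esub> J) ` H. \<phi> (rep C))"
proof -
  let ?S = "(\<lambda>h. h <#\<^bsub>G\<^esub> J) ` H"
  have Hc: "a \<in> carrier G" if "a \<in> H" for a by (rule subgroup.mem_carrier[OF H that])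
  have const: "\<phi> (rep (a <#\<^bsub>G\<^esub> J)) = \<phi> a" if a: "a \<in> H" for a
  proof -
    have j: "inv a \<otimes> rep (a <#\<^bsub>G\<^esub> J) \<in> J" using rep_lc(2)[OF J Hc[OF a]] .
    have "rep (a <#\<^bsub>G\<^esub> J) = a \<otimes> (inv a \<otimes> rep (a <#\<^bsub>G\<^esub> J))"
      using Hc[OF a] rep_lc(1)[OF J Hc[OF a]] by (simp add: m_assoc[symmetric])
    then show ?thesis using phi[OF a j] by simp
  qed
  have repH: "rep C \<in> H" and repC: "rep C <#\<^bsub>G\<^esub> J = C" if "C \<in> ?S" for C
    using rep_lcH[OF J H JH that] by auto
  define F where "F C = f (rep C) <#\<^bsub>G\<^esub> J" for C
  define Gi where "Gi C = g (rep C) <#\<^bsub>G\<^esub> J" for C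
  have repF: "inv (f (rep C)) \<otimes> rep (F C) \<in> J" if "C \<in> ?S" for C
    unfolding F_def using rep_lc(2)[OF J Hc[OF fH[OF repH[OF that]]]] .
  have repGi: "inv (g (rep C)) \<otimes> rep (Gi C) \<in> J" if "C \<in> ?S" for C
    unfolding Gi_def using rep_lc(2)[OF J Hc[OF gH[OF repH[OF that]]]] .
  have FS: "F C \<in> ?S" if "C \<in> ?S" for C unfolding F_def by (rule imageI[OF fH[OF repH[OF that]]])
  have GS: "Gi C \<in> ?S" if "C \<in> ?S" for C unfolding Gi_def by (rule imageI[OF gH[OF repH[OF that]]])
  have Jm: "x \<otimes> y \<in> J" if "x \<in> J" "y \<in> J" for x y by (rule subgroup.m_closed[OF J that])
  have trans: "inv a \<otimes> c \<in> J" if "a \<in> carrier G" "b \<in> carrier G" "c \<in> carrier G"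
     "inv a \<otimes> b \<in> J" "inv b \<otimes> c \<in> J" for a b c
  proof -
    have "(inv a \<otimes> b) \<otimes> (inv b \<otimes> c) = inv a \<otimes> c" using that(1-3)
      by (simp add: m_assoc[symmetric]) (simp add: m_assoc)
    then show ?thesis using Jm[OF that(4,5)] by simp
  qed
  have GF: "Gi (F C) = C" if C: "C \<in> ?S" for C
  proof -
    have rF: "rep (F C) \<in> H" using repH[OF FS[OF C]] .
    have 1: "inv (g (f (rep C))) \<otimes> g (rep (F C)) \<in> J"
      by (rule gresp[OF fH[OF repH[OF C]] rF repF[OF C]])
    have 2: "inv (rep C) \<otimes> g (f (rep C)) \<in> J" using gf[OF repH[OF C]] .
    have "inv (rep C) \<otimes> g (rep (F C)) \<in> J"
      by (rule trans[OF Hc[OF repH[OF C]] Hc[OF gH[OF fH[OF repH[OF C]]]] Hc[OF gH[OF rF]] 2 1])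
    then have "rep C <#\<^bsub>G\<^esub> J = g (rep (F C)) <#\<^bsub>G\<^esub> J"
      using lc_eq_iff[OF J Hc[OF repH[OF C]] Hc[OF gH[OF rF]]] by simp
    then show ?thesis using repC[OF C] unfolding Gi_def by simp
  qed
  have FG: "F (Gi C) = C" if C: "C \<in> ?S" for C
  proof -
    have rG: "rep (Gi C) \<in> H" using repH[OF GS[OF C]] .
    have 1: "inv (f (g (rep C))) \<otimes> f (rep (Gi C)) \<in> J"
      by (rule fresp[OF gH[OF repH[OF C]] rG repGi[OF C]])
    have 2: "inv (rep C) \<otimes> f (g (rep C)) \<in> J" using fg[OF repH[OF C]] .
    have "inv (rep C) \<otimes> f (rep (Gi C)) \<in> J"
      by (rule trans[OF Hc[OF repH[OF C]] Hc[OF fH[OF gH[OF repH[OF C]]]] Hc[OF fH[OF rG]] 2 1])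
    then have "rep C <#\<^bsub>G\<^esub> J = f (rep (Gi C)) <#\<^bsub>G\<^esub> J"
      using lc_eq_iff[OF J Hc[OF repH[OF C]] Hc[OF fH[OF rG]]] by simp
    then show ?thesis using repC[OF C] unfolding F_def by simp
  qed
  have bij: "bij_betw F ?S ?S"
  proof (rule bij_betw_byWitness[where f'=Gi])
    show "\<forall>a\<in>?S. Gi (F a) = a" using GF by blast
    show "\<forall>a\<in>?S. F (Gi a) = a" using FG by blast
    show "F ` ?S \<subseteq> ?S" using FS by blast
    show "Gi ` ?S \<subseteq> ?S" using GS by blast
  qed
  have "(\<Sum>C\<in>?S. \<phi> (f (rep C))) = (\<Sum>C\<in>?S. \<phi> (rep (F C)))"
    by (rule sum.cong) (simp_all add: F_def const fH repH)
  also have "\<dots> = (\<Sum>C\<in>?S. \<phi> (rep C))"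
    using sum.reindex_bij_betw[OF bij, of "\<lambda>C. \<phi> (rep C)"] by simp
  finally show ?thesis .
qed

end

locale grp =
  fixes G :: "('g, 'b) monoid_scheme" (structure) and T :: "'g topology"
    and smul :: "complex \<Rightarrow> 'v::ab_group_add \<Rightarrow> 'v" (infixr "*w" 75) and \<rho> :: "'g \<Rightarrow> 'v \<Rightarrow> 'v"
  assumes prof: "profinite_group G T" and sm: "smooth_rep G T smul \<rho>"

sublocale grp \<subseteq> group G using prof by (simp add: profinite_group_def)
sublocale grp \<subseteq> vs: vector_space smul using sm by (simp add: smooth_rep_def)

context grp begin

lemma topG: "topspace T = carrier G" using prof by (simp add: profinite_group_def)
lemma multc: "continuous_map (prod_topology T T) T (\<lambda>(x, y). x \<otimes> y)"
  using prof by (simp add: profinite_group_def)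
lemma compT: "compact_space T" using prof by (simp add: profinite_group_def)
lemma rlin: "g \<in> carrier G \<Longrightarrow> Vector_Spaces.linear smul smul (\<rho> g)"
  using sm by (simp add: smooth_rep_def)
lemma radd: "g \<in> carrier G \<Longrightarrow> \<rho> g (x + y) = \<rho> g x + \<rho> g y"
  using rlin unfolding Vector_Spaces.linear_iff by blast
lemma rscale: "g \<in> carrier G \<Longrightarrow> \<rho> g (c *w x) = c *w \<rho> g x"
  using rlin unfolding Vector_Spaces.linear_iff by blast
lemma rdiff: "g \<in> carrier G \<Longrightarrow> \<rho> g (x - y) = \<rho> g x - \<rho> g y"
  by (rule additive_diff) (rule radd)
lemma rzero: "g \<in> carrier G \<Longrightarrow> \<rho> g 0 = 0"
  by (rule additive_zero) (rule radd)
lemma rsum: "g \<in> carrier G \<Longrightarrow> \<rho> g (sum f S) = (\<Sum>a\<in>S. \<rho> g (f a))"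
  by (rule additive_sum) (rule radd)
lemma r1: "\<rho> \<one> x = x" using sm by (simp add: smooth_rep_def)
lemma rmul: "g \<in> carrier G \<Longrightarrow> h \<in> carrier G \<Longrightarrow> \<rho> (g \<otimes> h) x = \<rho> g (\<rho> h x)"
  using sm by (simp add: smooth_rep_def)
lemma rinv: "g \<in> carrier G \<Longrightarrow> \<rho> (inv g) (\<rho> g x) = x"
  using rmul[of "inv g" g x] by (simp add: r1)
lemma smooth: "\<exists>K. subgroup K G \<and> openin T K \<and> (\<forall>k\<in>K. \<rho> k m = m)"
  using sm by (simp add: smooth_rep_def)

lemma lmult_cont: assumes a: "a \<in> carrier G" shows "continuous_map T T (\<lambda>x. a \<otimes> x)"
proof -
  have "continuous_map T (prod_topology T T) (\<lambda>x. (a, x))"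
    by (rule continuous_map_pairedI) (simp_all add: a topG)
  from continuous_map_compose[OF this multc] show ?thesis by (simp add: comp_def)
qed

lemma lcos_open:
  assumes K: "K \<subseteq> carrier G" "openin T K" and a: "a \<in> carrier G"
  shows "openin T (a <#\<^bsub>G\<^esub> K)"
proof -
  have eq: "a <#\<^bsub>G\<^esub> K = {x \<in> topspace T. inv a \<otimes> x \<in> K}"
  proof (rule equalityI; rule subsetI)
    fix x assume "x \<in> a <#\<^bsub>G\<^esub> K"
    then obtain k where k: "k \<in> K" "x = a \<otimes> k" unfolding l_coset_def by blast
    have kc: "k \<in> carrier G" using k(1) K(1) by (rule subsetD[rotated])
    have "inv a \<otimes> x = k" using a kc k(2) by (simp add: m_assoc[symmetric])
    then show "x \<in> {x \<in> topspace T. inv a \<otimes> x \<in> K}" using k a kc by (simp add: topG)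
  next
    fix x assume x: "x \<in> {x \<in> topspace T. inv a \<otimes> x \<in> K}"
    then have xc: "x \<in> carrier G" by (simp add: topG)
    have "x = a \<otimes> (inv a \<otimes> x)" using a xc by (simp add: m_assoc[symmetric])
    then show "x \<in> a <#\<^bsub>G\<^esub> K" using x unfolding l_coset_def by blast
  qed
  show ?thesis unfolding eq
    by (rule openin_continuous_map_preimage[OF lmult_cont[OF inv_closed[OF a]] K(2)])
qed

lemma finite_lc:
  assumes K: "subgroup K G" "openin T K"
  shows "finite ((\<lambda>a. a <#\<^bsub>G\<^esub> K) ` carrier G)"
proof -
  let ?U = "(\<lambda>a. a <#\<^bsub>G\<^esub> K) ` carrier G"
  have Kc: "K \<subseteq> carrier G" using K(1) by (rule subgroup.subset)
  have op: "\<forall>C\<in>?U. openin T C" using lcos_open[OF Kc K(2)] by blast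
  have cov: "topspace T \<subseteq> \<Union>?U"
  proof
    fix x assume "x \<in> topspace T"
    then have x: "x \<in> carrier G" by (simp add: topG)
    then have "x \<in> x <#\<^bsub>G\<^esub> K" by (rule lc_self[OF K(1)])
    then show "x \<in> \<Union>?U" using x by blast
  qed
  obtain F where F: "finite F" "F \<subseteq> ?U" "topspace T \<subseteq> \<Union>F"
    using compT op cov unfolding compact_space_alt by meson
  have "?U \<subseteq> F"
  proof
    fix C assume "C \<in> ?U"
    then obtain a where a: "a \<in> carrier G" "C = a <#\<^bsub>G\<^esub> K" by (rule imageE)
    have "a \<in> \<Union>F" using F(3) a(1) by (auto simp: topG)
    then obtain D where D: "D \<in> F" "a \<in> D" by (rule UnionE)
    obtain b where b: "b \<in> carrier G" "D = b <#\<^bsub>G\<^esub> K" using D(1) F(2) by blast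
    have "a \<in> b <#\<^bsub>G\<^esub> K" using D(2) b(2) by simp
    then have "b <#\<^bsub>G\<^esub> K = a <#\<^bsub>G\<^esub> K" by (rule l_repr_independence[OF _ b(1) K(1)])
    then show "C \<in> F" using a(2) b(2) D(1) by simp
  qed
  then show ?thesis using F(1) by (rule finite_subset)
qed

lemma open_subgroup_union:
  assumes N: "subgroup N G" and KN: "K \<subseteq> N" and K: "openin T K" and one: "\<one> \<in> K"
  shows "openin T N"
proof -
  have Kc: "K \<subseteq> carrier G" using KN subgroup.subset[OF N] by (rule order_trans)
  have eq: "N = \<Union>((\<lambda>n. n <#\<^bsub>G\<^esub> K) ` N)"
  proof (rule equalityI; rule subsetI)
    fix x assume x: "x \<in> N"
    then have "x = x \<otimes> \<one>" using subgroup.mem_carrier[OF N x] by simp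
    then have "x \<in> x <#\<^bsub>G\<^esub> K" using one unfolding l_coset_def by blast
    then show "x \<in> \<Union>((\<lambda>n. n <#\<^bsub>G\<^esub> K) ` N)" using x by blast
  next
    fix x assume "x \<in> \<Union>((\<lambda>n. n <#\<^bsub>G\<^esub> K) ` N)"
    then obtain n k where nk: "n \<in> N" "k \<in> K" "x = n \<otimes> k" unfolding l_coset_def by blast
    have "k \<in> N" using nk(2) KN by (rule subsetD[rotated])
    then show "x \<in> N" using subgroup.m_closed[OF N nk(1)] nk(3) by simp
  qed
  show ?thesis
    by (subst eq, rule openin_Union) (use lcos_open[OF Kc K] subgroup.mem_carrier[OF N] in blast)
qed


definition orb where "orb X = {\<rho> g x | g x. g \<in> carrier G \<and> x \<in> X}"
definition Nsub where "Nsub X = {g \<in> carrier G. \<forall>w\<in>orb X. \<rho> g w = w}"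

lemma orb1_finite: "finite {\<rho> g x | g. g \<in> carrier G}"
proof -
  obtain K where K: "subgroup K G" "openin T K" "\<forall>k\<in>K. \<rho> k x = x" using smooth by blast
  have "{\<rho> g x | g. g \<in> carrier G} \<subseteq> (\<lambda>C. \<rho> (rep C) x) ` ((\<lambda>a. a <#\<^bsub>G\<^esub> K) ` carrier G)"
  proof
    fix v assume "v \<in> {\<rho> g x | g. g \<in> carrier G}"
    then obtain g where g: "g \<in> carrier G" "v = \<rho> g x" by auto
    define j where "j = inv g \<otimes> rep (g <#\<^bsub>G\<^esub> K)"
    have j: "j \<in> K" unfolding j_def by (rule rep_lc(2)[OF K(1) g(1)])
    have rc: "rep (g <#\<^bsub>G\<^esub> K) \<in> carrier G" by (rule rep_lc(1)[OF K(1) g(1)])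
    have "rep (g <#\<^bsub>G\<^esub> K) = g \<otimes> j" unfolding j_def using g(1) rc by (simp add: m_assoc[symmetric])
    then have "\<rho> (rep (g <#\<^bsub>G\<^esub> K)) x = \<rho> g (\<rho> j x)"
      using rmul g(1) subgroup.mem_carrier[OF K(1) j] by simp
    also have "\<dots> = v" using K(3) j g(2) by simp
    finally have vv: "\<rho> (rep (g <#\<^bsub>G\<^esub> K)) x = v" .
    show "v \<in> (\<lambda>C. \<rho> (rep C) x) ` ((\<lambda>a. a <#\<^bsub>G\<^esub> K) ` carrier G)"
      by (rule image_eqI[where f="\<lambda>C. \<rho> (rep C) x" and x="g <#\<^bsub>G\<^esub> K", OF vv[symmetric]], rule imageI[OF g(1)])
  qed
  then show ?thesis by (rule finite_surj[OF finite_lc[OF K(1,2)]])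
qed

lemma orb_finite: assumes "finite X" shows "finite (orb X)"
proof -
  have "orb X = (\<Union>x\<in>X. {\<rho> g x | g. g \<in> carrier G})" unfolding orb_def by auto
  then show ?thesis using assms orb1_finite by simp
qed

lemma orb_mem: assumes "x \<in> X" shows "x \<in> orb X"
  unfolding orb_def mem_Collect_eq
  by (rule exI[of _ "\<one>"], rule exI[of _ x]) (simp add: r1 assms)

lemma orb_closed: assumes g: "g \<in> carrier G" and w: "w \<in> orb X" shows "\<rho> g w \<in> orb X"
proof -
  obtain h x where hx: "h \<in> carrier G" "x \<in> X" "w = \<rho> h x" using w unfolding orb_def by auto
  then have e: "\<rho> g w = \<rho> (g \<otimes> h) x" using rmul g by simp
  show ?thesis unfolding orb_def mem_Collect_eq
    by (rule exI[of _ "g \<otimes> h"], rule exI[of _ x]) (use hx g e in simp)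
qed

lemma W_closed: assumes g: "g \<in> carrier G" and a: "a \<in> vs.span (orb X)" shows "\<rho> g a \<in> vs.span (orb X)"
  using a
proof (induct rule: vs.span_induct)
  case base
  show ?case unfolding vs.subspace_def
    by (simp add: rzero[OF g] radd[OF g] rscale[OF g] vs.span_zero vs.span_add vs.span_scale)
next
  case (step x)
  then show ?case using orb_closed[OF g] vs.span_base by blast
qed

lemma N_sub: "subgroup (Nsub X) G"
proof (rule subgroupI)
  show "Nsub X \<subseteq> carrier G" unfolding Nsub_def by blast
  have "\<one> \<in> Nsub X" unfolding Nsub_def by (simp add: r1)
  then show "Nsub X \<noteq> {}" by blast
  fix a b assume a: "a \<in> Nsub X" and b: "b \<in> Nsub X"
  have ac: "a \<in> carrier G" and bc: "b \<in> carrier G" using a b unfolding Nsub_def by auto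
  show "inv a \<in> Nsub X" unfolding Nsub_def
  proof (intro CollectI conjI ballI)
    show "inv a \<in> carrier G" using ac by simp
    fix w assume w: "w \<in> orb X"
    have "\<rho> (inv a) w = \<rho> (inv a) (\<rho> a w)" using a w unfolding Nsub_def by simp
    then show "\<rho> (inv a) w = w" using rinv[OF ac] by simp
  qed
  show "a \<otimes> b \<in> Nsub X" using a b ac bc rmul unfolding Nsub_def by simp
qed

lemma N_conj: assumes g: "g \<in> carrier G" and n: "n \<in> Nsub X" shows "g \<otimes> n \<otimes> inv g \<in> Nsub X"
proof -
  have nc: "n \<in> carrier G" using n unfolding Nsub_def by simp
  have "\<rho> (g \<otimes> n \<otimes> inv g) w = w" if w: "w \<in> orb X" for w
  proof -
    have iw: "\<rho> (inv g) w \<in> orb X" using orb_closed[OF inv_closed[OF g] w] .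
    have "\<rho> (g \<otimes> n \<otimes> inv g) w = \<rho> g (\<rho> n (\<rho> (inv g) w))" using g nc rmul by simp
    also have "\<dots> = \<rho> g (\<rho> (inv g) w)" using n iw unfolding Nsub_def by simp
    also have "\<dots> = w" using rmul[of g "inv g" w] g r1 by simp
    finally show ?thesis .
  qed
  then show ?thesis unfolding Nsub_def using g nc by simp
qed

lemma N_fix: assumes n: "n \<in> Nsub X" and a: "a \<in> vs.span (orb X)" shows "\<rho> n a = a"
  using a
proof (induct rule: vs.span_induct)
  case base
  have nc: "n \<in> carrier G" using n unfolding Nsub_def by simp
  show ?case unfolding vs.subspace_def
    by (simp add: rzero[OF nc] radd[OF nc] rscale[OF nc])
next
  case (step x)
  then show ?case using n unfolding Nsub_def by simp
qed

lemma N_open: assumes X: "finite X" shows "openin T (Nsub X)"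
proof -
  have "\<forall>w. \<exists>K. subgroup K G \<and> openin T K \<and> (\<forall>k\<in>K. \<rho> k w = w)" using smooth by blast
  from choice[OF this] obtain Kf where Kf0: "\<forall>w. subgroup (Kf w) G \<and> openin T (Kf w) \<and> (\<forall>k\<in>Kf w. \<rho> k w = w)"
    by (rule exE)
  have Kf: "\<And>w. subgroup (Kf w) G" "\<And>w. openin T (Kf w)" "\<And>w. \<forall>k\<in>Kf w. \<rho> k w = w"
    using Kf0 by simp_all
  define K where "K = (\<Inter>w\<in>orb X. Kf w) \<inter> topspace T"
  have Ko: "openin T K" unfolding K_def by (rule openin_INT[OF orb_finite[OF X] Kf(2)])
  have one: "\<one> \<in> K" unfolding K_def using subgroup.one_closed[OF Kf(1)] by (simp add: topG)
  have KN: "K \<subseteq> Nsub X" unfolding K_def Nsub_def using Kf(3) by (auto simp: topG)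
  show ?thesis by (rule open_subgroup_union[OF N_sub KN Ko one])
qed


lemma inv_cancel1: "x \<in> carrier G \<Longrightarrow> y \<in> carrier G \<Longrightarrow> inv x \<otimes> (x \<otimes> y) = y"
  by (simp add: m_assoc[symmetric])
lemma inv_cancel2: "x \<in> carrier G \<Longrightarrow> y \<in> carrier G \<Longrightarrow> x \<otimes> (inv x \<otimes> y) = y"
  by (simp add: m_assoc[symmetric])

lemma sum_const_scale: "(\<Sum>a\<in>S. v) = of_nat (card S) *w v"
  using vs.scale_sum_left[of "\<lambda>_. 1" S v] by simp

definition JX where "JX X H = H \<inter> Nsub X"
definition cs where "cs X H = (\<lambda>h. h <#\<^bsub>G\<^esub> JX X H) ` H"
definition AX where "AX X H m = (1 / of_nat (card (cs X H))) *w (\<Sum>C\<in>cs X H. \<rho> (rep C) m)"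

lemma stab_sub: "subgroup (stab G \<rho> m) G"
proof (rule subgroupI)
  show "stab G \<rho> m \<subseteq> carrier G" unfolding stab_def by blast
  have "\<one> \<in> stab G \<rho> m" unfolding stab_def by (simp add: r1)
  then show "stab G \<rho> m \<noteq> {}" by blast
  fix a b assume a: "a \<in> stab G \<rho> m" and b: "b \<in> stab G \<rho> m"
  have ac: "a \<in> carrier G" and bc: "b \<in> carrier G" and am: "\<rho> a m = m" and bm: "\<rho> b m = m"
    using a b unfolding stab_def by auto
  have "\<rho> (inv a) m = \<rho> (inv a) (\<rho> a m)" using am by simp
  then show "inv a \<in> stab G \<rho> m" unfolding stab_def using rinv[OF ac] ac by simp
  show "a \<otimes> b \<in> stab G \<rho> m" unfolding stab_def using ac bc am bm rmul by simp
qed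

context
  fixes H assumes H: "subgroup H G"
begin

lemma Hc: "a \<in> H \<Longrightarrow> a \<in> carrier G" by (rule subgroup.mem_carrier[OF H])

lemma J_sub: "subgroup (JX X H) G" unfolding JX_def by (rule subgroups_Inter_pair[OF H N_sub])
lemma J_H: "JX X H \<subseteq> H" unfolding JX_def by blast
lemma J_conj: assumes h: "h \<in> H" and j: "j \<in> JX X H" shows "h \<otimes> j \<otimes> inv h \<in> JX X H"
proof -
  have jH: "j \<in> H" and jN: "j \<in> Nsub X" using j unfolding JX_def by auto
  have "h \<otimes> j \<otimes> inv h \<in> H"
    using subgroup.m_closed[OF H subgroup.m_closed[OF H h jH] subgroup.m_inv_closed[OF H h]] .
  moreover have "h \<otimes> j \<otimes> inv h \<in> Nsub X" by (rule N_conj[OF Hc[OF h] jN])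
  ultimately show ?thesis unfolding JX_def by blast
qed

lemma cs_finite: assumes X: "finite X" shows "finite (cs X H)"
proof -
  let ?N = "Nsub X" and ?J = "JX X H"
  define F where "F C = rep C <#\<^bsub>G\<^esub> ?N" for C
  have inj: "inj_on F (cs X H)"
  proof (rule inj_onI)
    fix C C' assume C: "C \<in> cs X H" and C': "C' \<in> cs X H" and e: "F C = F C'"
    have rC: "rep C \<in> H" "rep C <#\<^bsub>G\<^esub> ?J = C" using rep_lcH[OF J_sub H J_H] C unfolding cs_def by auto
    have rC': "rep C' \<in> H" "rep C' <#\<^bsub>G\<^esub> ?J = C'" using rep_lcH[OF J_sub H J_H] C' unfolding cs_def by auto
    have "inv (rep C) \<otimes> rep C' \<in> ?N"
      using e lc_eq_iff[OF N_sub Hc[OF rC(1)] Hc[OF rC'(1)]] unfolding F_def by simp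
    moreover have "inv (rep C) \<otimes> rep C' \<in> H"
      by (rule subgroup.m_closed[OF H subgroup.m_inv_closed[OF H rC(1)] rC'(1)])
    ultimately have "inv (rep C) \<otimes> rep C' \<in> ?J" unfolding JX_def by blast
    then have "rep C <#\<^bsub>G\<^esub> ?J = rep C' <#\<^bsub>G\<^esub> ?J"
      using lc_eq_iff[OF J_sub Hc[OF rC(1)] Hc[OF rC'(1)]] by simp
    then show "C = C'" using rC(2) rC'(2) by simp
  qed
  have img: "F ` cs X H \<subseteq> (\<lambda>a. a <#\<^bsub>G\<^esub> ?N) ` carrier G"
  proof
    fix D assume "D \<in> F ` cs X H"
    then obtain C where C: "C \<in> cs X H" "D = F C" by (rule imageE)
    have "rep C \<in> H" using rep_lcH[OF J_sub H J_H] C(1) unfolding cs_def by auto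
    then show "D \<in> (\<lambda>a. a <#\<^bsub>G\<^esub> ?N) ` carrier G" unfolding C(2) F_def by (rule imageI[OF Hc])
  qed
  show ?thesis by (rule inj_on_finite[OF inj img finite_lc[OF N_sub N_open[OF X]]])
qed

lemma cs_card: assumes X: "finite X" shows "card (cs X H) \<noteq> 0"
proof -
  have "\<one> <#\<^bsub>G\<^esub> JX X H \<in> cs X H" unfolding cs_def by (rule imageI[OF subgroup.one_closed[OF H]])
  then show ?thesis using cs_finite[OF X] by auto
qed

lemma A_add: "AX X H (x + y) = AX X H x + AX X H y"
proof -
  have r: "rep C \<in> carrier G" if "C \<in> cs X H" for C
    using Hc rep_lcH[OF J_sub H J_H] that unfolding cs_def by blast
  show ?thesis unfolding AX_def
    by (simp add: radd[OF r] sum.distrib vs.scale_right_distrib cong: sum.cong)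
qed

lemma A_scale: "AX X H (c *w x) = c *w AX X H x"
proof -
  have r: "rep C \<in> carrier G" if "C \<in> cs X H" for C
    using Hc rep_lcH[OF J_sub H J_H] that unfolding cs_def by blast
  show ?thesis unfolding AX_def
    by (simp add: rscale[OF r] vs.scale_sum_right[symmetric] vs.scale_left_commute[of c] cong: sum.cong)
qed

lemma A_sum: "AX X H (sum f S) = (\<Sum>a\<in>S. AX X H (f a))"
  by (rule additive_sum) (rule A_add)

lemma A_W: assumes m: "m \<in> vs.span (orb X)" shows "AX X H m \<in> vs.span (orb X)"
proof -
  have r: "rep C \<in> carrier G" if "C \<in> cs X H" for C
    using Hc rep_lcH[OF J_sub H J_H] that unfolding cs_def by blast
  show ?thesis unfolding AX_def
    by (intro vs.span_scale vs.span_sum W_closed[OF r m])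
qed

lemma A_fixed: assumes X: "finite X" and v: "\<forall>u\<in>H. \<rho> u v = v" shows "AX X H v = v"
proof -
  have r: "rep C \<in> H" if "C \<in> cs X H" for C
    using rep_lcH[OF J_sub H J_H] that unfolding cs_def by blast
  have "(\<Sum>C\<in>cs X H. \<rho> (rep C) v) = (\<Sum>C\<in>cs X H. v)" using v r by simp
  also have "\<dots> = of_nat (card (cs X H)) *w v" by (rule sum_const_scale)
  finally show ?thesis unfolding AX_def using cs_card[OF X] by simp
qed


lemma Jrep: "C \<in> cs X H \<Longrightarrow> rep C \<in> H"
  using rep_lcH[OF J_sub H J_H] unfolding cs_def by blast

lemma A_transl: assumes m: "m \<in> vs.span (orb X)" and u: "u \<in> H"
  shows "AX X H (\<rho> u m) = AX X H m"
proof -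
  let ?J = "JX X H"
  have uc: "u \<in> carrier G" by (rule Hc[OF u])
  have phi: "\<rho> (a \<otimes> j) m = \<rho> a m" if "a \<in> H" "j \<in> ?J" for a j
  proof -
    have jN: "j \<in> Nsub X" using that(2) unfolding JX_def by blast
    have "\<rho> (a \<otimes> j) m = \<rho> a (\<rho> j m)" by (rule rmul[OF Hc[OF that(1)] Hc[OF J_H[THEN subsetD, OF that(2)]]])
    then show ?thesis using N_fix[OF jN m] by simp
  qed
  have s: "(\<Sum>C\<in>cs X H. \<rho> (rep C \<otimes> u) m) = (\<Sum>C\<in>cs X H. \<rho> (rep C) m)"
    unfolding cs_def
  proof (rule suminv[OF J_sub H J_H, where \<phi>="\<lambda>a. \<rho> a m" and f="\<lambda>a. a \<otimes> u" and g="\<lambda>a. a \<otimes> inv u"])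
    show "\<rho> (a \<otimes> j) m = \<rho> a m" if "a \<in> H" "j \<in> ?J" for a j using phi that .
    show "a \<otimes> u \<in> H" if "a \<in> H" for a using subgroup.m_closed[OF H that u] .
    show "a \<otimes> inv u \<in> H" if "a \<in> H" for a using subgroup.m_closed[OF H that subgroup.m_inv_closed[OF H u]] .
    show "inv (a \<otimes> u) \<otimes> (b \<otimes> u) \<in> ?J" if "a \<in> H" "b \<in> H" "inv a \<otimes> b \<in> ?J" for a b
    proof -
      have "inv (a \<otimes> u) \<otimes> (b \<otimes> u) = inv u \<otimes> (inv a \<otimes> b) \<otimes> inv (inv u)"
        using Hc that(1,2) uc by (simp add: inv_mult_group m_assoc inv_cancel1 inv_cancel2)
      then show ?thesis using J_conj[OF subgroup.m_inv_closed[OF H u] that(3)] by simp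
    qed
    show "inv (a \<otimes> inv u) \<otimes> (b \<otimes> inv u) \<in> ?J" if "a \<in> H" "b \<in> H" "inv a \<otimes> b \<in> ?J" for a b
    proof -
      have "inv (a \<otimes> inv u) \<otimes> (b \<otimes> inv u) = u \<otimes> (inv a \<otimes> b) \<otimes> inv u"
        using Hc that(1,2) uc by (simp add: inv_mult_group m_assoc inv_cancel1 inv_cancel2)
      then show ?thesis using J_conj[OF u that(3)] by simp
    qed
    show "inv a \<otimes> (a \<otimes> inv u \<otimes> u) \<in> ?J" if "a \<in> H" for a
      using Hc[OF that] uc subgroup.one_closed[OF J_sub] by (simp add: m_assoc inv_cancel1 inv_cancel2)
    show "inv a \<otimes> (a \<otimes> u \<otimes> inv u) \<in> ?J" if "a \<in> H" for a
      using Hc[OF that] uc subgroup.one_closed[OF J_sub] by (simp add: m_assoc inv_cancel1 inv_cancel2)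
  qed
  have "(\<Sum>C\<in>cs X H. \<rho> (rep C) (\<rho> u m)) = (\<Sum>C\<in>cs X H. \<rho> (rep C \<otimes> u) m)"
    by (rule sum.cong) (simp_all add: rmul Hc[OF Jrep] uc)
  then show ?thesis unfolding AX_def using s by simp
qed

lemma A_conj:
  assumes m: "m \<in> vs.span (orb X)" and l: "l \<in> carrier G"
    and nl: "(\<lambda>u. l \<otimes> u \<otimes> inv l) ` H = H"
  shows "AX X H (\<rho> l m) = \<rho> l (AX X H m)"
proof -
  let ?J = "JX X H"
  have lm: "\<rho> l m \<in> vs.span (orb X)" by (rule W_closed[OF l m])
  have fH: "l \<otimes> a \<otimes> inv l \<in> H" if "a \<in> H" for a
  proof -
    have "l \<otimes> a \<otimes> inv l \<in> (\<lambda>u. l \<otimes> u \<otimes> inv l) ` H" by (rule imageI[OF that])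
    then show ?thesis by (simp only: nl)
  qed
  have gH: "inv l \<otimes> a \<otimes> l \<in> H" if a: "a \<in> H" for a
  proof -
    have "a \<in> (\<lambda>u. l \<otimes> u \<otimes> inv l) ` H" using a by (simp only: nl)
    then obtain u where u: "u \<in> H" "a = l \<otimes> u \<otimes> inv l" by (rule imageE)
    have "inv l \<otimes> a \<otimes> l = u" unfolding u(2) using l Hc[OF u(1)] by (simp add: m_assoc inv_cancel1 inv_cancel2)
    then show ?thesis using u(1) by simp
  qed
  have phi: "\<rho> (a \<otimes> j) (\<rho> l m) = \<rho> a (\<rho> l m)" if "a \<in> H" "j \<in> ?J" for a j
  proof -
    have jN: "j \<in> Nsub X" using that(2) unfolding JX_def by blast
    have "\<rho> (a \<otimes> j) (\<rho> l m) = \<rho> a (\<rho> j (\<rho> l m))" by (rule rmul[OF Hc[OF that(1)] Hc[OF J_H[THEN subsetD, OF that(2)]]])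
    then show ?thesis using N_fix[OF jN lm] by simp
  qed
  have JinH: "x \<in> H" if "x \<in> ?J" for x using that J_H by blast
  have JinN: "x \<in> Nsub X" if "x \<in> ?J" for x using that unfolding JX_def by blast
  have s: "(\<Sum>C\<in>cs X H. \<rho> (l \<otimes> rep C \<otimes> inv l) (\<rho> l m)) = (\<Sum>C\<in>cs X H. \<rho> (rep C) (\<rho> l m))"
    unfolding cs_def
  proof (rule suminv[OF J_sub H J_H, where \<phi>="\<lambda>a. \<rho> a (\<rho> l m)" and f="\<lambda>a. l \<otimes> a \<otimes> inv l" and g="\<lambda>a. inv l \<otimes> a \<otimes> l"])
    show "\<rho> (a \<otimes> j) (\<rho> l m) = \<rho> a (\<rho> l m)" if "a \<in> H" "j \<in> ?J" for a j using phi that .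
    show "l \<otimes> a \<otimes> inv l \<in> H" if "a \<in> H" for a using fH that .
    show "inv l \<otimes> a \<otimes> l \<in> H" if "a \<in> H" for a using gH that .
    show "inv (l \<otimes> a \<otimes> inv l) \<otimes> (l \<otimes> b \<otimes> inv l) \<in> ?J" if "a \<in> H" "b \<in> H" "inv a \<otimes> b \<in> ?J" for a b
    proof -
      have e: "inv (l \<otimes> a \<otimes> inv l) \<otimes> (l \<otimes> b \<otimes> inv l) = l \<otimes> (inv a \<otimes> b) \<otimes> inv l"
        using Hc that(1,2) l by (simp add: inv_mult_group m_assoc inv_cancel1 inv_cancel2)
      have "l \<otimes> (inv a \<otimes> b) \<otimes> inv l \<in> H" using fH JinH[OF that(3)] .
      moreover have "l \<otimes> (inv a \<otimes> b) \<otimes> inv l \<in> Nsub X" using N_conj[OF l JinN[OF that(3)]] .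
      ultimately show ?thesis unfolding e JX_def by blast
    qed
    show "inv (inv l \<otimes> a \<otimes> l) \<otimes> (inv l \<otimes> b \<otimes> l) \<in> ?J" if "a \<in> H" "b \<in> H" "inv a \<otimes> b \<in> ?J" for a b
    proof -
      have e: "inv (inv l \<otimes> a \<otimes> l) \<otimes> (inv l \<otimes> b \<otimes> l) = inv l \<otimes> (inv a \<otimes> b) \<otimes> inv (inv l)"
        using Hc that(1,2) l by (simp add: inv_mult_group m_assoc inv_cancel1 inv_cancel2)
      have "inv l \<otimes> (inv a \<otimes> b) \<otimes> l \<in> H" using gH JinH[OF that(3)] .
      moreover have "inv l \<otimes> (inv a \<otimes> b) \<otimes> inv (inv l) \<in> Nsub X"
        using N_conj[OF inv_closed[OF l] JinN[OF that(3)]] .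
      ultimately show ?thesis unfolding e JX_def using l by simp
    qed
    show "inv a \<otimes> (l \<otimes> (inv l \<otimes> a \<otimes> l) \<otimes> inv l) \<in> ?J" if "a \<in> H" for a
      using Hc[OF that] l subgroup.one_closed[OF J_sub] by (simp add: m_assoc inv_cancel1 inv_cancel2)
    show "inv a \<otimes> (inv l \<otimes> (l \<otimes> a \<otimes> inv l) \<otimes> l) \<in> ?J" if "a \<in> H" for a
      using Hc[OF that] l subgroup.one_closed[OF J_sub] by (simp add: m_assoc inv_cancel1 inv_cancel2)
  qed
  have e2: "\<rho> (l \<otimes> r \<otimes> inv l) (\<rho> l m) = \<rho> l (\<rho> r m)" if r: "r \<in> carrier G" for r
  proof -
    have "\<rho> (l \<otimes> r \<otimes> inv l) (\<rho> l m) = \<rho> (l \<otimes> r) (\<rho> (inv l) (\<rho> l m))"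
      using rmul l r by simp
    also have "\<dots> = \<rho> (l \<otimes> r) m" using rinv[OF l] by simp
    also have "\<dots> = \<rho> l (\<rho> r m)" using rmul l r by simp
    finally show ?thesis .
  qed
  have "(\<Sum>C\<in>cs X H. \<rho> (rep C) (\<rho> l m)) = (\<Sum>C\<in>cs X H. \<rho> l (\<rho> (rep C) m))"
    using s e2 Hc[OF Jrep] by simp
  also have "\<dots> = \<rho> l (\<Sum>C\<in>cs X H. \<rho> (rep C) m)" by (simp add: rsum[OF l])
  finally show ?thesis unfolding AX_def by (simp add: rscale[OF l])
qed

definition Sm where "Sm m = H \<inter> stab G \<rho> m"
definition cs' where "cs' m = (\<lambda>h. h <#\<^bsub>G\<^esub> Sm m) ` H"

lemma Sm_sub: "subgroup (Sm m) G" unfolding Sm_def by (rule subgroups_Inter_pair[OF H stab_sub])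

lemma haar_eq: "haar_proj G smul \<rho> H m = (1 / of_nat (card (cs' m))) *w (\<Sum>C\<in>cs' m. \<rho> (rep C) m)"
  unfolding haar_proj_def Let_def cs'_def Sm_def rep_def ..

lemma Srep: "C \<in> cs' m \<Longrightarrow> rep C \<in> H"
  using rep_lcH[OF Sm_sub H] unfolding cs'_def Sm_def by blast

lemma HF: assumes u: "u \<in> H" shows "\<rho> u (haar_proj G smul \<rho> H m) = haar_proj G smul \<rho> H m"
proof -
  let ?S = "Sm m"
  have uc: "u \<in> carrier G" by (rule Hc[OF u])
  have SH: "?S \<subseteq> H" unfolding Sm_def by blast
  have s: "(\<Sum>C\<in>cs' m. \<rho> (u \<otimes> rep C) m) = (\<Sum>C\<in>cs' m. \<rho> (rep C) m)"
    unfolding cs'_def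
  proof (rule suminv[OF Sm_sub H SH, where \<phi>="\<lambda>a. \<rho> a m" and f="\<lambda>a. u \<otimes> a" and g="\<lambda>a. inv u \<otimes> a"])
    show "\<rho> (a \<otimes> j) m = \<rho> a m" if "a \<in> H" "j \<in> ?S" for a j
    proof -
      have j: "j \<in> carrier G" "\<rho> j m = m" using that(2) unfolding Sm_def stab_def by auto
      then show ?thesis using rmul Hc[OF that(1)] by simp
    qed
    show "u \<otimes> a \<in> H" if "a \<in> H" for a using subgroup.m_closed[OF H u that] .
    show "inv u \<otimes> a \<in> H" if "a \<in> H" for a using subgroup.m_closed[OF H subgroup.m_inv_closed[OF H u] that] .
    show "inv (u \<otimes> a) \<otimes> (u \<otimes> b) \<in> ?S" if "a \<in> H" "b \<in> H" "inv a \<otimes> b \<in> ?S" for a b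
    proof -
      have "inv (u \<otimes> a) \<otimes> (u \<otimes> b) = inv a \<otimes> b"
        using Hc that(1,2) uc by (simp add: inv_mult_group m_assoc inv_cancel1 inv_cancel2)
      then show ?thesis using that(3) by simp
    qed
    show "inv (inv u \<otimes> a) \<otimes> (inv u \<otimes> b) \<in> ?S" if "a \<in> H" "b \<in> H" "inv a \<otimes> b \<in> ?S" for a b
    proof -
      have "inv (inv u \<otimes> a) \<otimes> (inv u \<otimes> b) = inv a \<otimes> b"
        using Hc that(1,2) uc by (simp add: inv_mult_group m_assoc inv_cancel1 inv_cancel2)
      then show ?thesis using that(3) by simp
    qed
    show "inv a \<otimes> (u \<otimes> (inv u \<otimes> a)) \<in> ?S" if "a \<in> H" for a
      using Hc[OF that] uc subgroup.one_closed[OF Sm_sub] by (simp add: m_assoc[symmetric])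
    show "inv a \<otimes> (inv u \<otimes> (u \<otimes> a)) \<in> ?S" if "a \<in> H" for a
      using Hc[OF that] uc subgroup.one_closed[OF Sm_sub] by (simp add: m_assoc[symmetric])
  qed
  have "\<rho> u (\<Sum>C\<in>cs' m. \<rho> (rep C) m) = (\<Sum>C\<in>cs' m. \<rho> (u \<otimes> rep C) m)"
    by (simp add: rsum[OF uc] rmul[OF uc] Hc[OF Srep])
  then show ?thesis unfolding haar_eq using s by (simp add: rscale[OF uc])
qed

lemma P_eq_A: assumes X: "finite X" and m: "m \<in> vs.span (orb X)"
  shows "haar_proj G smul \<rho> H m = AX X H m"
proof -
  let ?J = "JX X H" and ?S = "Sm m"
  have JS: "?J \<subseteq> ?S"
  proof
    fix j assume j: "j \<in> ?J"
    have "j \<in> H" "j \<in> Nsub X" using j unfolding JX_def by auto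
    then show "j \<in> ?S" unfolding Sm_def stab_def using N_fix[OF _ m] Hc by auto
  qed
  have fin: "finite (cs' m)"
  proof (rule finite_surj[OF cs_finite[OF X]])
    show "cs' m \<subseteq> (\<lambda>D. rep D <#\<^bsub>G\<^esub> ?S) ` cs X H"
    proof
      fix C assume "C \<in> cs' m"
      then obtain h where h: "h \<in> H" "C = h <#\<^bsub>G\<^esub> ?S" unfolding cs'_def by (rule imageE)
      have "inv h \<otimes> rep (h <#\<^bsub>G\<^esub> ?J) \<in> ?J" by (rule rep_lc(2)[OF J_sub Hc[OF h(1)]])
      then have "inv h \<otimes> rep (h <#\<^bsub>G\<^esub> ?J) \<in> ?S" using JS by blast
      then have "h <#\<^bsub>G\<^esub> ?S = rep (h <#\<^bsub>G\<^esub> ?J) <#\<^bsub>G\<^esub> ?S"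
        using lc_eq_iff[OF Sm_sub Hc[OF h(1)] rep_lc(1)[OF J_sub Hc[OF h(1)]]] by simp
      moreover have "h <#\<^bsub>G\<^esub> ?J \<in> cs X H" unfolding cs_def by (rule imageI[OF h(1)])
      ultimately show "C \<in> (\<lambda>D. rep D <#\<^bsub>G\<^esub> ?S) ` cs X H" unfolding h(2) by (rule image_eqI)
    qed
  qed
  have nz: "card (cs' m) \<noteq> 0"
  proof -
    have "\<one> <#\<^bsub>G\<^esub> ?S \<in> cs' m" unfolding cs'_def by (rule imageI[OF subgroup.one_closed[OF H]])
    then show ?thesis using fin by auto
  qed
  let ?P = "haar_proj G smul \<rho> H m"
  have "AX X H ?P = ?P" by (rule A_fixed[OF X]) (simp add: HF)
  moreover have "AX X H ?P = AX X H m"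
  proof -
    have "AX X H ?P = (1 / of_nat (card (cs' m))) *w (\<Sum>C\<in>cs' m. AX X H (\<rho> (rep C) m))"
      unfolding haar_eq by (simp add: A_scale A_sum)
    also have "\<dots> = (1 / of_nat (card (cs' m))) *w (\<Sum>C\<in>cs' m. AX X H m)"
      using A_transl[OF m Srep] by simp
    also have "\<dots> = AX X H m" using nz by (simp add: sum_const_scale)
    finally show ?thesis .
  qed
  ultimately show ?thesis by simp
qed
end


context
  fixes X Bs
  assumes X: "finite X" and BsO: "Bs \<subseteq> orb X" and indep: "vs.independent Bs"
    and spanB: "vs.span Bs = vs.span (orb X)"
begin

definition B0 where "B0 a b = (\<Sum>\<beta>\<in>Bs. inner (vs.representation Bs a \<beta>) (vs.representation Bs b \<beta>))"
definition Bf where "Bf a b = (\<Sum>C\<in>(\<lambda>g. g <#\<^bsub>G\<^esub> Nsub X) ` carrier G. B0 (\<rho> (rep C) a) (\<rho> (rep C) b))"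

lemma finB: "finite Bs" using finite_subset[OF BsO orb_finite[OF X]] .
lemma inB: "a \<in> vs.span (orb X) \<Longrightarrow> a \<in> vs.span Bs" using spanB by simp

lemma B0_diffL: assumes "a \<in> vs.span (orb X)" "b \<in> vs.span (orb X)"
  shows "B0 (a - b) c = B0 a c - B0 b c"
  unfolding B0_def using vs.representation_diff[OF indep inB[OF assms(2)] inB[OF assms(1)]]
  by (simp add: inner_diff_left sum_subtractf)
lemma B0_addL: assumes "a \<in> vs.span (orb X)" "b \<in> vs.span (orb X)"
  shows "B0 (a + b) c = B0 a c + B0 b c"
  unfolding B0_def using vs.representation_add[OF indep inB[OF assms(2)] inB[OF assms(1)]]
  by (simp add: inner_add_left sum.distrib)
lemma B0_zeroL: "B0 0 c = 0"
  unfolding B0_def by (simp add: vs.representation_zero)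
lemma B0_scaleL: assumes "a \<in> vs.span (orb X)"
  shows "B0 (complex_of_real r *w a) c = r * B0 a c"
  unfolding B0_def using vs.representation_scale[OF indep inB[OF assms]]
  by (simp add: inner_complex_def sum_distrib_left algebra_simps)
lemma B0_sym: "B0 a b = B0 b a" unfolding B0_def by (simp add: inner_commute)
lemma B0_nonneg: "0 \<le> B0 a a" unfolding B0_def by (simp add: sum_nonneg)
lemma B0_pos: assumes a: "a \<in> vs.span (orb X)" and z: "B0 a a = 0" shows "a = 0"
proof -
  have "\<forall>\<beta>\<in>Bs. inner (vs.representation Bs a \<beta>) (vs.representation Bs a \<beta>) = 0"
    using z unfolding B0_def by (subst (asm) sum_nonneg_eq_0_iff[OF finB]) simp_all
  then have r0: "\<forall>\<beta>\<in>Bs. vs.representation Bs a \<beta> = 0" by simp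
  have "a = (\<Sum>b\<in>Bs. vs.representation Bs a b *w b)"
    by (rule vs.sum_representation_eq[OF indep inB[OF a] finB order_refl, symmetric])
  also have "\<dots> = 0" using r0 by simp
  finally show ?thesis .
qed

lemma lcG_sub: "subgroup (carrier G) G" by (rule subgroup_self)
lemma repG: "C \<in> (\<lambda>g. g <#\<^bsub>G\<^esub> Nsub X) ` carrier G \<Longrightarrow> rep C \<in> carrier G"
  using rep_lcH(1)[OF N_sub lcG_sub subgroup.subset[OF N_sub]] by blast

lemma Bf_diffL: assumes a: "a \<in> vs.span (orb X)" and b: "b \<in> vs.span (orb X)"
  shows "Bf (a - b) c = Bf a c - Bf b c"
  unfolding Bf_def
  by (simp add: rdiff[OF repG] B0_diffL[OF W_closed[OF repG a] W_closed[OF repG b]] sum_subtractf cong: sum.cong)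
lemma Bf_addL: assumes a: "a \<in> vs.span (orb X)" and b: "b \<in> vs.span (orb X)"
  shows "Bf (a + b) c = Bf a c + Bf b c"
  unfolding Bf_def
  by (simp add: radd[OF repG] B0_addL[OF W_closed[OF repG a] W_closed[OF repG b]] sum.distrib cong: sum.cong)
lemma Bf_zeroL: "Bf 0 c = 0" unfolding Bf_def by (simp add: rzero[OF repG] B0_zeroL cong: sum.cong)
lemma Bf_scaleL: assumes a: "a \<in> vs.span (orb X)"
  shows "Bf (complex_of_real r *w a) c = r * Bf a c"
  unfolding Bf_def
  by (simp add: rscale[OF repG] B0_scaleL[OF W_closed[OF repG a]] sum_distrib_left cong: sum.cong)
lemma Bf_sym: "Bf a b = Bf b a" unfolding Bf_def by (simp add: B0_sym)
lemma Bf_diffR: assumes "b \<in> vs.span (orb X)" "c \<in> vs.span (orb X)"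
  shows "Bf a (b - c) = Bf a b - Bf a c"
  using Bf_diffL[OF assms] Bf_sym by metis

lemma Bf_sumL: assumes v: "\<And>d. d \<in> F \<Longrightarrow> v d \<in> vs.span (orb X)"
  shows "Bf (sum v F) c = (\<Sum>d\<in>F. Bf (v d) c)"
  using v
proof (induction F rule: infinite_finite_induct)
  case (infinite A) then show ?case by (simp add: Bf_zeroL)
next
  case empty then show ?case by (simp add: Bf_zeroL)
next
  case (insert x F)
  have "sum v F \<in> vs.span (orb X)" using insert.prems by (intro vs.span_sum) auto
  then show ?case using insert by (simp add: Bf_addL)
qed

lemma Bf_pos: assumes a: "a \<in> vs.span (orb X)" and z: "Bf a a = 0" shows "a = 0"
proof -
  let ?L = "(\<lambda>g. g <#\<^bsub>G\<^esub> Nsub X) ` carrier G"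
  have fin: "finite ?L" by (rule finite_lc[OF N_sub N_open[OF X]])
  have "\<forall>C\<in>?L. B0 (\<rho> (rep C) a) (\<rho> (rep C) a) = 0"
    using z unfolding Bf_def by (subst (asm) sum_nonneg_eq_0_iff[OF fin]) (simp_all add: B0_nonneg)
  moreover have L1: "\<one> <#\<^bsub>G\<^esub> Nsub X \<in> ?L" by (rule imageI[OF one_closed])
  ultimately have "B0 (\<rho> (rep (\<one> <#\<^bsub>G\<^esub> Nsub X)) a) (\<rho> (rep (\<one> <#\<^bsub>G\<^esub> Nsub X)) a) = 0" by blast
  then have r0: "\<rho> (rep (\<one> <#\<^bsub>G\<^esub> Nsub X)) a = 0" by (rule B0_pos[OF W_closed[OF repG[OF L1] a]])
  have "a = \<rho> (inv (rep (\<one> <#\<^bsub>G\<^esub> Nsub X))) (\<rho> (rep (\<one> <#\<^bsub>G\<^esub> Nsub X)) a)"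
    by (rule rinv[OF repG[OF L1], symmetric])
  also have "\<dots> = 0" unfolding r0 by (rule rzero[OF inv_closed[OF repG[OF L1]]])
  finally show ?thesis .
qed

lemma Bf_inv: assumes g: "g \<in> carrier G" and a: "a \<in> vs.span (orb X)" and b: "b \<in> vs.span (orb X)"
  shows "Bf (\<rho> g a) (\<rho> g b) = Bf a b"
proof -
  let ?N = "Nsub X"
  have s: "(\<Sum>C\<in>(\<lambda>h. h <#\<^bsub>G\<^esub> ?N) ` carrier G. (\<lambda>x. B0 (\<rho> x a) (\<rho> x b)) (rep C \<otimes> g))
      = (\<Sum>C\<in>(\<lambda>h. h <#\<^bsub>G\<^esub> ?N) ` carrier G. (\<lambda>x. B0 (\<rho> x a) (\<rho> x b)) (rep C))"
  proof (rule suminv[OF N_sub lcG_sub subgroup.subset[OF N_sub], where f="\<lambda>x. x \<otimes> g" and g="\<lambda>x. x \<otimes> inv g"])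
    show "B0 (\<rho> (x \<otimes> j) a) (\<rho> (x \<otimes> j) b) = B0 (\<rho> x a) (\<rho> x b)" if "x \<in> carrier G" "j \<in> ?N" for x j
    proof -
      have jc: "j \<in> carrier G" using that(2) unfolding Nsub_def by simp
      show ?thesis using rmul[OF that(1) jc] N_fix[OF that(2) a] N_fix[OF that(2) b] by simp
    qed
    show "x \<otimes> g \<in> carrier G" if "x \<in> carrier G" for x using that g by simp
    show "x \<otimes> inv g \<in> carrier G" if "x \<in> carrier G" for x using that g by simp
    show "inv (x \<otimes> g) \<otimes> (y \<otimes> g) \<in> ?N" if "x \<in> carrier G" "y \<in> carrier G" "inv x \<otimes> y \<in> ?N" for x y
    proof -
      have "inv (x \<otimes> g) \<otimes> (y \<otimes> g) = inv g \<otimes> (inv x \<otimes> y) \<otimes> inv (inv g)"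
        using that(1,2) g by (simp add: inv_mult_group m_assoc inv_cancel1 inv_cancel2)
      then show ?thesis using N_conj[OF inv_closed[OF g] that(3)] by simp
    qed
    show "inv (x \<otimes> inv g) \<otimes> (y \<otimes> inv g) \<in> ?N" if "x \<in> carrier G" "y \<in> carrier G" "inv x \<otimes> y \<in> ?N" for x y
    proof -
      have "inv (x \<otimes> inv g) \<otimes> (y \<otimes> inv g) = g \<otimes> (inv x \<otimes> y) \<otimes> inv g"
        using that(1,2) g by (simp add: inv_mult_group m_assoc inv_cancel1 inv_cancel2)
      then show ?thesis using N_conj[OF g that(3)] by simp
    qed
    show "inv x \<otimes> (x \<otimes> inv g \<otimes> g) \<in> ?N" if "x \<in> carrier G" for x
      using that g subgroup.one_closed[OF N_sub] by (simp add: m_assoc inv_cancel1 inv_cancel2)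
    show "inv x \<otimes> (x \<otimes> g \<otimes> inv g) \<in> ?N" if "x \<in> carrier G" for x
      using that g subgroup.one_closed[OF N_sub] by (simp add: m_assoc inv_cancel1 inv_cancel2)
  qed
  show ?thesis unfolding Bf_def using s repG g by (simp add: rmul cong: sum.cong)
qed

lemma Bf_adj: assumes g: "g \<in> carrier G" and a: "a \<in> vs.span (orb X)" and b: "b \<in> vs.span (orb X)"
  shows "Bf (\<rho> g a) b = Bf a (\<rho> (inv g) b)"
proof -
  have "Bf (\<rho> g a) b = Bf (\<rho> (inv g) (\<rho> g a)) (\<rho> (inv g) b)"
    using Bf_inv[OF inv_closed[OF g] W_closed[OF g a] b] by simp
  then show ?thesis using rinv[OF g] by simp
qed

lemma A_adj: assumes H: "subgroup H G" and a: "a \<in> vs.span (orb X)" and b: "b \<in> vs.span (orb X)"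
  shows "Bf (AX X H a) b = Bf a (AX X H b)"
proof -
  let ?J = "JX X H" and ?S = "cs X H"
  have r: "rep C \<in> H" if "C \<in> ?S" for C using Jrep[OF H that] .
  have rc: "rep C \<in> carrier G" if "C \<in> ?S" for C using Hc[OF H r[OF that]] .
  define k where "k = 1 / real (card ?S)"
  have kk: "1 / of_nat (card ?S) = complex_of_real k" unfolding k_def by simp
  have sumW: "(\<Sum>C\<in>?S. \<rho> (rep C) x) \<in> vs.span (orb X)" if "x \<in> vs.span (orb X)" for x
    by (intro vs.span_sum W_closed[OF rc that])
  have L: "Bf (AX X H x) y = k * (\<Sum>C\<in>?S. Bf (\<rho> (rep C) x) y)" if x: "x \<in> vs.span (orb X)" for x y
  proof -
    have "Bf (\<Sum>C\<in>?S. \<rho> (rep C) x) y = (\<Sum>C\<in>?S. Bf (\<rho> (rep C) x) y)"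
      by (rule Bf_sumL) (rule W_closed[OF rc x])
    then show ?thesis unfolding AX_def kk using Bf_scaleL[OF sumW[OF x]] by simp
  qed
  have s: "(\<Sum>C\<in>?S. (\<lambda>x. Bf a (\<rho> x b)) (inv (rep C))) = (\<Sum>C\<in>?S. (\<lambda>x. Bf a (\<rho> x b)) (rep C))"
    unfolding cs_def
  proof (rule suminv[OF J_sub[OF H] H J_H[OF H], where f="\<lambda>x. inv x" and g="\<lambda>x. inv x"])
    show "Bf a (\<rho> (x \<otimes> j) b) = Bf a (\<rho> x b)" if "x \<in> H" "j \<in> ?J" for x j
    proof -
      have jN: "j \<in> Nsub X" using that(2) unfolding JX_def by blast
      have jc: "j \<in> carrier G" using jN unfolding Nsub_def by simp
      show ?thesis using rmul[OF Hc[OF H that(1)] jc] N_fix[OF jN b] by simp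
    qed
    show "inv x \<in> H" if "x \<in> H" for x using subgroup.m_inv_closed[OF H that] .
    show "inv x \<in> H" if "x \<in> H" for x using subgroup.m_inv_closed[OF H that] .
    show "inv (inv x) \<otimes> inv y \<in> ?J" if "x \<in> H" "y \<in> H" "inv x \<otimes> y \<in> ?J" for x y
    proof -
      have xc: "x \<in> carrier G" and yc: "y \<in> carrier G" using Hc[OF H] that by auto
      have j: "inv (inv x \<otimes> y) \<in> ?J" by (rule subgroup.m_inv_closed[OF J_sub[OF H] that(3)])
      have "inv (inv x) \<otimes> inv y = x \<otimes> inv (inv x \<otimes> y) \<otimes> inv x"
        using xc yc by (simp add: inv_mult_group m_assoc inv_cancel1 inv_cancel2)
      then show ?thesis using J_conj[OF H that(1) j] by simp
    qed
    then show "inv (inv x) \<otimes> inv y \<in> ?J" if "x \<in> H" "y \<in> H" "inv x \<otimes> y \<in> ?J" for x y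
      using that .
    show "inv x \<otimes> inv (inv x) \<in> ?J" if "x \<in> H" for x
      using Hc[OF H that] subgroup.one_closed[OF J_sub[OF H]] by simp
    then show "inv x \<otimes> inv (inv x) \<in> ?J" if "x \<in> H" for x using that .
  qed
  have "Bf (AX X H a) b = k * (\<Sum>C\<in>?S. Bf a (\<rho> (inv (rep C)) b))"
    unfolding L[OF a] using Bf_adj[OF rc a b] by simp
  also have "\<dots> = k * (\<Sum>C\<in>?S. Bf a (\<rho> (rep C) b))" using s by simp
  also have "\<dots> = k * (\<Sum>C\<in>?S. Bf (\<rho> (rep C) b) a)" by (simp add: Bf_sym)
  also have "\<dots> = Bf (AX X H b) a" unfolding L[OF b] ..
  also have "\<dots> = Bf a (AX X H b)" by (rule Bf_sym)
  finally show ?thesis .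
qed

end


lemma spanX: "x \<in> X \<Longrightarrow> x \<in> vs.span (orb X)" by (rule vs.span_base[OF orb_mem])

context
  fixes H assumes H: "subgroup H G"
begin

lemma P_add: "haar_proj G smul \<rho> H (x + y) = haar_proj G smul \<rho> H x + haar_proj G smul \<rho> H y"
proof -
  let ?X = "{x, y}"
  have X: "finite ?X" by simp
  have x: "x \<in> vs.span (orb ?X)" and y: "y \<in> vs.span (orb ?X)" by (simp_all add: spanX)
  show ?thesis using P_eq_A[OF H X x] P_eq_A[OF H X y] P_eq_A[OF H X vs.span_add[OF x y]] A_add[OF H] by simp
qed

lemma P_scale: "haar_proj G smul \<rho> H (c *w x) = c *w haar_proj G smul \<rho> H x"
proof -
  let ?X = "{x}"
  have X: "finite ?X" by simp
  have x: "x \<in> vs.span (orb ?X)" by (simp add: spanX)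
  show ?thesis using P_eq_A[OF H X x] P_eq_A[OF H X vs.span_scale[OF x]] A_scale[OF H] by simp
qed

lemma P_idem: "haar_proj G smul \<rho> H (haar_proj G smul \<rho> H x) = haar_proj G smul \<rho> H x"
proof -
  let ?p = "haar_proj G smul \<rho> H x"
  let ?X = "{?p}"
  have X: "finite ?X" by simp
  have p: "?p \<in> vs.span (orb ?X)" by (simp add: spanX)
  have "haar_proj G smul \<rho> H ?p = AX ?X H ?p" by (rule P_eq_A[OF H X p])
  also have "\<dots> = ?p" by (rule A_fixed[OF H X]) (simp add: HF[OF H])
  finally show ?thesis .
qed

lemma P_comm: assumes l: "l \<in> carrier G" and nl: "(\<lambda>u. l \<otimes> u \<otimes> inv l) ` H = H"
  shows "haar_proj G smul \<rho> H (\<rho> l m) = \<rho> l (haar_proj G smul \<rho> H m)"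
proof -
  let ?X = "{m}"
  have X: "finite ?X" by simp
  have m: "m \<in> vs.span (orb ?X)" by (simp add: spanX)
  show ?thesis using P_eq_A[OF H X m] P_eq_A[OF H X W_closed[OF l m]] A_conj[OF H m l nl] by simp
qed

lemma P_W: assumes X: "finite X" and m: "m \<in> vs.span (orb X)"
  shows "haar_proj G smul \<rho> H m \<in> vs.span (orb X)"
  using P_eq_A[OF H X m] A_W[OF H m] by simp

end

lemma local_good:
  assumes U: "subgroup U G" and V: "subgroup V G"
  shows "\<exists>Ob Bf. goodf smul (haar_proj G smul \<rho> U) (haar_proj G smul \<rho> V) Ob Bf \<and> x \<in> vs.span Ob"
proof -
  let ?X = "{x}"
  have X: "finite ?X" by simp
  obtain Bs where Bs: "Bs \<subseteq> orb ?X" "vs.independent Bs" "orb ?X \<subseteq> vs.span Bs"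
    by (rule vs.maximal_independent_subset)
  have spanB: "vs.span Bs = vs.span (orb ?X)"
  proof
    show "vs.span Bs \<subseteq> vs.span (orb ?X)" by (rule vs.span_mono[OF Bs(1)])
    show "vs.span (orb ?X) \<subseteq> vs.span Bs" by (rule vs.span_minimal[OF Bs(3) vs.subspace_span])
  qed
  let ?P = "haar_proj G smul \<rho> U" and ?Q = "haar_proj G smul \<rho> V" and ?B = "Bf ?X Bs"
  have "goodf smul ?P ?Q (orb ?X) ?B"
    unfolding goodf_def
  proof (intro conjI ballI impI)
    show "finite (orb ?X)" by (rule orb_finite[OF X])
    fix a assume a: "a \<in> vs.span (orb ?X)"
    show "?P a \<in> vs.span (orb ?X)" by (rule P_W[OF U X a])
    show "?Q a \<in> vs.span (orb ?X)" by (rule P_W[OF V X a])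
    show "a = 0" if "?B a a = 0" by (rule Bf_pos[OF X Bs(1,2) spanB a that])
    fix b assume b: "b \<in> vs.span (orb ?X)"
    show "?B (?P a) b = ?B a (?P b)"
      using A_adj[OF X Bs(1,2) spanB U a b] P_eq_A[OF U X a] P_eq_A[OF U X b] by simp
    show "?B (?Q a) b = ?B a (?Q b)"
      using A_adj[OF X Bs(1,2) spanB V a b] P_eq_A[OF V X a] P_eq_A[OF V X b] by simp
    fix c assume c: "c \<in> vs.span (orb ?X)"
    show "?B (a - b) c = ?B a c - ?B b c" by (rule Bf_diffL[OF X Bs(1,2) spanB a b])
    show "?B a (b - c) = ?B a b - ?B a c" by (rule Bf_diffR[OF X Bs(1,2) spanB b c])
  qed
  then show ?thesis using spanX[of x ?X] by blast
qed

lemma main_grp: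
  assumes U: "subgroup U G" and V: "subgroup V G" and L: "L \<subseteq> carrier G"
    and nU: "\<forall>l\<in>L. (\<lambda>u. l \<otimes> u \<otimes> inv l) ` U = U" and nV: "\<forall>l\<in>L. (\<lambda>u. l \<otimes> u \<otimes> inv l) ` V = V"
  shows "\<exists>z :: 'v \<Rightarrow> 'v.
           Vector_Spaces.linear smul smul z \<and> bij z \<and>
           (\<forall>l \<in> L. z \<circ> \<rho> l = \<rho> l \<circ> z) \<and>
           z \<circ> haar_proj G smul \<rho> U = haar_proj G smul \<rho> U \<circ> z \<and>
           z \<circ> haar_proj G smul \<rho> V = haar_proj G smul \<rho> V \<circ> z \<and>
           (let p = Hilbert_Choice.inv z \<circ> haar_proj G smul \<rho> U \<circ> haar_proj G smul \<rho> V in p \<circ> p = p)"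
proof -
  let ?P = "haar_proj G smul \<rho> U" and ?Q = "haar_proj G smul \<rho> V"
  have A: "alg smul ?P ?Q"
  proof (rule alg.intro)
    show "vector_space smul" by (rule vs.vector_space_axioms)
    show "alg_axioms smul ?P ?Q"
    proof (rule alg_axioms.intro)
      show "\<And>x y. ?P (x + y) = ?P x + ?P y" by (rule P_add[OF U])
      show "\<And>c x. ?P (c *w x) = c *w ?P x" by (rule P_scale[OF U])
      show "\<And>x y. ?Q (x + y) = ?Q x + ?Q y" by (rule P_add[OF V])
      show "\<And>c x. ?Q (c *w x) = c *w ?Q x" by (rule P_scale[OF V])
      show "\<And>x. ?P (?P x) = ?P x" by (rule P_idem[OF U])
      show "\<And>x. ?Q (?Q x) = ?Q x" by (rule P_idem[OF V])
      show "\<And>x. \<exists>Ob Bf. goodf smul ?P ?Q Ob Bf \<and> x \<in> module.span smul Ob"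
        by (rule local_good[OF U V])
    qed
  qed
  obtain z where z: "Vector_Spaces.linear smul smul z" "bij z"
    "\<forall>T. (\<forall>x y. T (x + y) = T x + T y) \<and> (\<forall>x. T (?P x) = ?P (T x)) \<and> (\<forall>x. T (?Q x) = ?Q (T x))
        \<longrightarrow> z \<circ> T = T \<circ> z"
    "z \<circ> ?P = ?P \<circ> z" "z \<circ> ?Q = ?Q \<circ> z" "let p = Hilbert_Choice.inv z \<circ> ?P \<circ> ?Q in p \<circ> p = p"
    using alg.alg_main[OF A] by blast
  have "z \<circ> \<rho> l = \<rho> l \<circ> z" if l: "l \<in> L" for l
  proof -
    have lc: "l \<in> carrier G" using l L by blast
    have "(\<forall>x y. \<rho> l (x + y) = \<rho> l x + \<rho> l y) \<and> (\<forall>x. \<rho> l (?P x) = ?P (\<rho> l x)) \<and> (\<forall>x. \<rho> l (?Q x) = ?Q (\<rho> l x))"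
      using radd[OF lc] P_comm[OF U lc] P_comm[OF V lc] nU nV l by simp
    then show ?thesis using z(3) by blast
  qed
  then show ?thesis using z by blast
qed
end

theorem mainTheorem1:
  fixes G :: "('g, 'b) monoid_scheme" and T :: "'g topology"
    and L U V :: "'g set"
    and smul :: "complex \<Rightarrow> 'v::ab_group_add \<Rightarrow> 'v" and \<rho> :: "'g \<Rightarrow> 'v \<Rightarrow> 'v"
  assumes "profinite_group G T"
    and "closed_subgroup G T L" and "closed_subgroup G T U" and "closed_subgroup G T V"
    and "normalises G L U" and "normalises G L V"
    and "smooth_rep G T smul \<rho>"
  shows "\<exists>z :: 'v \<Rightarrow> 'v.
           Vector_Spaces.linear smul smul z \<and> bij z \<and>
           (\<forall>l \<in> L. z \<circ> \<rho> l = \<rho> l \<circ> z) \<and>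
           z \<circ> haar_proj G smul \<rho> U = haar_proj G smul \<rho> U \<circ> z \<and>
           z \<circ> haar_proj G smul \<rho> V = haar_proj G smul \<rho> V \<circ> z \<and>
           (let p = Hilbert_Choice.inv z \<circ> haar_proj G smul \<rho> U \<circ> haar_proj G smul \<rho> V in p \<circ> p = p)"
  proof -
  interpret grp G T smul \<rho> by (rule grp.intro) (fact assms(1), fact assms(7))
  have U: "subgroup U G" using assms(3) by (simp add: closed_subgroup_def)
  have V: "subgroup V G" using assms(4) by (simp add: closed_subgroup_def)
  have Ls: "subgroup L G" using assms(2) by (simp add: closed_subgroup_def)
  have Lc: "L \<subseteq> carrier G" by (rule subgroup.subset[OF Ls])
  have nU: "\<forall>l\<in>L. (\<lambda>u. l \<otimes>\<^bsub>G\<^esub> u \<otimes>\<^bsub>G\<^esub> inv\<^bsub>G\<^esub> l) ` U = U"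
    using assms(5) by (simp add: normalises_def)
  have nV: "\<forall>l\<in>L. (\<lambda>u. l \<otimes>\<^bsub>G\<^esub> u \<otimes>\<^bsub>G\<^esub> inv\<^bsub>G\<^esub> l) ` V = V"
    using assms(6) by (simp add: normalises_def)
  show ?thesis by (rule main_grp[OF U V Lc nU nV])
qed

end
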